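(* Let $G$ be the line graph with $V=\{1,\dots,|V|\}$ and $E=\{(1,2),(2,3),\dots,(|V|-1,|V|)\}$. Let $\lambda_v>0$, $r_v>0$, $\rho_v=\lambda_v/r_v$. Under the maximal throughput allocation, $N(t)$ is positive recurrent if and only if $\sum_{v\in V}\rho_v<1$. If $\sum_{v\in V}\rho_v<1$, then in stationarity, for all $v\in V$, $$\mathbb E(N_v(t))=\frac{\rho_v\big(1+\sum_{v'\ge v}\rho_{v'}(\frac{r_v}{r_{v'}}-1)\big)}{\big(1-\sum_{v'\ge v}\rho_{v'}\big)\big(1-\sum_{v'>v}\rho_{v'}\big)},\qquad \psi_v=\frac{\lambda_v}{\mathbb E(N_v(t))}=\frac{r_v\big(1-\sum_{v'\ge v}\rho_{v'}\big)\big(1-\sum_{v'>v}\rho_{v'}\big)}{1+\sum_{v'\ge v}\rho_{v'}(\frac{r_v}{r_{v'}}-1)}.$$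
   Context: $N(t)\in\mathbb N^{V}$ is the continuous-time Markov chain with transition rates $n\to n+e^v$ at rate $\lambda_v$ and $n\to n-e^v$ at rate $r_v\gamma_v(n)\mathbf 1\{n_v\ge1\}$ ($e^v$ the $v$-th canonical basis vector). The maximal throughput allocation is $\gamma_v(n)=\prod_{v'\in\mathcal D(v)}\mathbf 1\{n_{v'}=0\}$, where $\mathcal D(v)$ is the set of strict descendants of $v$ (for the line graph, $\mathcal D(v)=\{v+1,\dots,|V|\}$): beam $v$ is served at full rate $r_v$ exactly when all its descendants are empty. *)

theory Defs
  imports "HOL-Analysis.Analysis"
begin

type_synonym state = "nat \<Rightarrow> nat"

definition line_edges :: "nat \<Rightarrow> (nat \<times> nat) set" where
  "line_edges n = {(v, Suc v) | v. 1 \<le> v \<and> Suc v \<le> n}"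

definition desc :: "nat \<Rightarrow> nat \<Rightarrow> nat set" where
  "desc n v = {w. (v, w) \<in> (line_edges n)\<^sup>+}"

definition states :: "nat \<Rightarrow> state set" where
  "states n = {x. \<forall>v. v \<notin> {1..n} \<longrightarrow> x v = 0}"

definition gamma :: "nat \<Rightarrow> nat \<Rightarrow> state \<Rightarrow> real" where
  "gamma n v x = (\<Prod>v'\<in>desc n v. (if x v' = 0 then 1 else 0))"

definition rate :: "nat \<Rightarrow> (nat \<Rightarrow> real) \<Rightarrow> (nat \<Rightarrow> real) \<Rightarrow> state \<Rightarrow> state \<Rightarrow> real" where
  "rate n lam r x y =
     (\<Sum>v\<in>{1..n}. (if y = x(v := Suc (x v)) then lam v else 0)
        + (if 1 \<le> x v \<and> y = x(v := x v - 1) then r v * gamma n v x else 0))"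

definition qout :: "nat \<Rightarrow> (nat \<Rightarrow> real) \<Rightarrow> (nat \<Rightarrow> real) \<Rightarrow> state \<Rightarrow> real" where
  "qout n lam r x = infsum (\<lambda>y. rate n lam r x y) (states n - {x})"

definition irreducible :: "nat \<Rightarrow> (nat \<Rightarrow> real) \<Rightarrow> (nat \<Rightarrow> real) \<Rightarrow> bool" where
  "irreducible n lam r \<longleftrightarrow>
     (\<forall>x\<in>states n. \<forall>y\<in>states n.
        (x, y) \<in> {(a, b). a \<in> states n \<and> b \<in> states n \<and> a \<noteq> b \<and> rate n lam r a b > 0}\<^sup>*)"

text \<open>Expected hitting time of state i (as a function of the starting state):
  the minimal non-negative solution of the standard hitting-time equations
  for a continuous-time Markov chain (Norris, Thm 3.3.3).\<close>
definition hit_time :: "nat \<Rightarrow> (nat \<Rightarrow> real) \<Rightarrow> (nat \<Rightarrow> real) \<Rightarrow> state \<Rightarrow> state \<Rightarrow> ennreal" where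
  "hit_time n lam r i = lfp (\<lambda>k y. if y = i then 0 else
       ennreal (1 / qout n lam r y)
       + infsum (\<lambda>z. ennreal (rate n lam r y z / qout n lam r y) * k z) (states n - {y}))"

definition mean_return :: "nat \<Rightarrow> (nat \<Rightarrow> real) \<Rightarrow> (nat \<Rightarrow> real) \<Rightarrow> state \<Rightarrow> ennreal" where
  "mean_return n lam r i =
     ennreal (1 / qout n lam r i)
     + infsum (\<lambda>z. ennreal (rate n lam r i z / qout n lam r i) * hit_time n lam r i z) (states n - {i})"

definition pos_recurrent :: "nat \<Rightarrow> (nat \<Rightarrow> real) \<Rightarrow> (nat \<Rightarrow> real) \<Rightarrow> bool" where
  "pos_recurrent n lam r \<longleftrightarrow>
     irreducible n lam r \<and> (\<forall>i\<in>states n. mean_return n lam r i < \<infinity>)"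

definition stationary :: "nat \<Rightarrow> (nat \<Rightarrow> real) \<Rightarrow> (nat \<Rightarrow> real) \<Rightarrow> (state \<Rightarrow> real) \<Rightarrow> bool" where
  "stationary n lam r \<pi> \<longleftrightarrow>
     (\<forall>x. \<pi> x \<ge> 0) \<and> (\<forall>x. x \<notin> states n \<longrightarrow> \<pi> x = 0) \<and>
     (\<pi> has_sum 1) (states n) \<and>
     (\<forall>x\<in>states n. \<pi> x * qout n lam r x = infsum (\<lambda>y. \<pi> y * rate n lam r y x) (states n - {x}))"

definition mean_N :: "nat \<Rightarrow> (state \<Rightarrow> real) \<Rightarrow> nat \<Rightarrow> real" where
  "mean_N n \<pi> v = infsum (\<lambda>x. real (x v) * \<pi> x) (states n)"

end

theory Submission
  imports Defs "HOL-Analysis.Harmonic_Numbers" "HOL-Library.Diagonal_Subsequence"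
begin


definition up :: "nat \<Rightarrow> state \<Rightarrow> state" where "up v x = x(v := Suc (x v))"
definition dn :: "nat \<Rightarrow> state \<Rightarrow> state" where "dn v x = x(v := x v - 1)"

lemma line_trancl: "(v, w) \<in> (line_edges n)\<^sup>+ \<longleftrightarrow> 1 \<le> v \<and> v < w \<and> w \<le> n"
proof
  assume "(v, w) \<in> (line_edges n)\<^sup>+"
  then show "1 \<le> v \<and> v < w \<and> w \<le> n"
    by (induction rule: trancl_induct) (auto simp: line_edges_def)
next
  assume h: "1 \<le> v \<and> v < w \<and> w \<le> n"
  then show "(v, w) \<in> (line_edges n)\<^sup>+"
  proof (induction w)
    case 0 then show ?case by simp
  next
    case (Suc w)
    show ?case
    proof (cases "v = w")
      case True
      then show ?thesis using Suc.prems by (auto simp: line_edges_def intro!: r_into_trancl)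
    next
      case False
      then have "(v, w) \<in> (line_edges n)\<^sup>+" using Suc by auto
      moreover have "(w, Suc w) \<in> line_edges n" using Suc.prems False by (auto simp: line_edges_def)
      ultimately show ?thesis by (rule trancl_into_trancl)
    qed
  qed
qed

lemma desc_eq: "1 \<le> v \<Longrightarrow> desc n v = {v<..n}"
  by (auto simp: desc_def line_trancl)

lemma gamma_eq: "1 \<le> v \<Longrightarrow> gamma n v x = (if \<forall>w\<in>{v<..n}. x w = 0 then 1 else 0)"
proof -
  assume v: "1 \<le> v"
  have "(\<Prod>v'\<in>{v<..n}. (if x v' = 0 then 1 else 0::real)) = (if \<forall>w\<in>{v<..n}. x w = 0 then 1 else 0)"
  proof (cases "\<forall>w\<in>{v<..n}. x w = 0")
    case True then show ?thesis by simp
  next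
    case False
    then obtain w where "w \<in> {v<..n}" "x w \<noteq> 0" by auto
    then show ?thesis using False by (auto simp: prod_zero_iff)
  qed
  then show ?thesis unfolding gamma_def desc_eq[OF v] .
qed

lemma gamma_01: "gamma n v x = 0 \<or> gamma n v x = 1"
proof (cases "finite (desc n v) \<and> (\<exists>w\<in>desc n v. x w \<noteq> 0)")
  case True
  then show ?thesis unfolding gamma_def by (auto simp: prod_zero_iff)
next
  case False
  then show ?thesis unfolding gamma_def
    by (cases "finite (desc n v)") (auto intro!: prod.neutral)
qed

lemma gamma_nonneg: "0 \<le> gamma n v x" using gamma_01[of n v x] by auto
lemma gamma_le1: "gamma n v x \<le> 1" using gamma_01[of n v x] by auto

lemma up_in_states: "x \<in> states n \<Longrightarrow> v \<in> {1..n} \<Longrightarrow> up v x \<in> states n"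
  by (auto simp: states_def up_def)
lemma dn_in_states: "x \<in> states n \<Longrightarrow> dn v x \<in> states n"
  by (auto simp: states_def dn_def)
lemma up_neq: "up v x \<noteq> x" by (auto simp: up_def fun_eq_iff)
lemma dn_neq: "1 \<le> x v \<Longrightarrow> dn v x \<noteq> x" by (auto simp: dn_def fun_eq_iff)
lemma up_dn: "1 \<le> x v \<Longrightarrow> up v (dn v x) = x" by (auto simp: up_def dn_def fun_eq_iff)
lemma dn_up: "dn v (up v x) = x" by (auto simp: up_def dn_def fun_eq_iff)
lemma up_eq_iff: "(y = up v x) \<longleftrightarrow> (1 \<le> y v \<and> x = dn v y)"
  by (auto simp: up_def dn_def fun_eq_iff)
lemma dn_eq_iff: "1 \<le> x v \<Longrightarrow> (y = dn v x) \<longleftrightarrow> (x = up v y)"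
  by (auto simp: up_def dn_def fun_eq_iff)

lemma rate_alt: "rate n lam r x y =
     (\<Sum>v\<in>{1..n}. (if y = up v x then lam v else 0)
        + (if 1 \<le> x v \<and> y = dn v x then r v * gamma n v x else 0))"
  unfolding rate_def up_def dn_def ..

locale beams =
  fixes n :: nat and lam r :: "nat \<Rightarrow> real"
  assumes n1: "n \<ge> 1"
    and lam_pos: "\<And>v. v\<in>{1..n} \<Longrightarrow> lam v > 0" and r_pos: "\<And>v. v\<in>{1..n} \<Longrightarrow> r v > 0"
begin

definition q :: "state \<Rightarrow> real" where
  "q x = (\<Sum>v\<in>{1..n}. lam v + (if 1 \<le> x v then r v * gamma n v x else 0))"
definition J :: "(state \<Rightarrow> real) \<Rightarrow> state \<Rightarrow> real" where
  "J f x = (\<Sum>v\<in>{1..n}. lam v * f (up v x) + (if 1 \<le> x v then r v * gamma n v x * f (dn v x) else 0))"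
definition InS :: "(state \<Rightarrow> real) \<Rightarrow> state \<Rightarrow> real" where
  "InS \<mu> x = (\<Sum>v\<in>{1..n}. (if 1 \<le> x v then lam v * \<mu> (dn v x) else 0) + r v * gamma n v (up v x) * \<mu> (up v x))"
definition Nb :: "state \<Rightarrow> state set" where
  "Nb x = (\<lambda>v. up v x) ` {1..n} \<union> (\<lambda>v. dn v x) ` {v\<in>{1..n}. 1 \<le> x v}"

lemma finite_Nb: "finite (Nb x)" by (simp add: Nb_def)

lemma Nb_sub: "x \<in> states n \<Longrightarrow> Nb x \<subseteq> states n - {x}"
  by (auto simp: Nb_def up_in_states dn_in_states up_neq dn_neq)

lemma rate_nonneg: "0 \<le> rate n lam r x y"
proof -
  have "\<And>v. v\<in>{1..n} \<Longrightarrow> 0 \<le> lam v \<and> 0 \<le> r v * gamma n v x"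
    using lam_pos r_pos gamma_nonneg by (simp add: less_imp_le)
  then show ?thesis unfolding rate_alt by (intro sum_nonneg add_nonneg_nonneg) simp_all
qed

lemma rate_supp: "rate n lam r x y \<noteq> 0 \<Longrightarrow> y \<in> Nb x"
proof -
  assume "rate n lam r x y \<noteq> 0"
  then obtain v where "v \<in> {1..n}" "(if y = up v x then lam v else 0)
        + (if 1 \<le> x v \<and> y = dn v x then r v * gamma n v x else 0) \<noteq> 0"
    unfolding rate_alt by (meson sum.neutral)
  then show ?thesis unfolding Nb_def by (auto split: if_splits)
qed

lemma sum_delta2:
  assumes "finite A"
  shows "(\<Sum>y\<in>A. (if y = a then c * f y else 0) + (if P \<and> y = b then d * f y else 0))
    = (if a \<in> A then c * f a else 0) + (if P \<and> b \<in> A then d * f b else (0::real))"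
proof -
  have "(\<Sum>y\<in>A. (if P \<and> y = b then d * f y else 0)) = (\<Sum>y\<in>A. (if y = b then (if P then d * f y else 0) else 0))"
    by (intro sum.cong) auto
  also have "\<dots> = (if b \<in> A then (if P then d * f b else 0) else 0)"
    using assms by (simp add: sum.delta')
  finally show ?thesis using assms by (simp add: sum.distrib sum.delta')
qed

lemma sum_rate:
  assumes "finite A"
  shows "(\<Sum>y\<in>A. rate n lam r x y * f y) =
    (\<Sum>v\<in>{1..n}. (if up v x \<in> A then lam v * f (up v x) else 0)
       + (if 1 \<le> x v \<and> dn v x \<in> A then r v * gamma n v x * f (dn v x) else 0))"
proof -
  have "(\<Sum>y\<in>A. rate n lam r x y * f y) = (\<Sum>y\<in>A. \<Sum>v\<in>{1..n}. (if y = up v x then lam v * f y else 0)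
        + (if 1 \<le> x v \<and> y = dn v x then r v * gamma n v x * f y else 0))"
    unfolding rate_alt sum_distrib_right by (intro sum.cong refl) (auto simp: algebra_simps)
  also have "\<dots> = (\<Sum>v\<in>{1..n}. \<Sum>y\<in>A. (if y = up v x then lam v * f y else 0)
        + (if 1 \<le> x v \<and> y = dn v x then r v * gamma n v x * f y else 0))"
    by (rule sum.swap)
  also have "\<dots> = (\<Sum>v\<in>{1..n}. (if up v x \<in> A then lam v * f (up v x) else 0)
       + (if 1 \<le> x v \<and> dn v x \<in> A then r v * gamma n v x * f (dn v x) else 0))"
    using assms by (intro sum.cong refl sum_delta2)
  finally show ?thesis .
qed

end


lemma up_eq_iff': "(x = up v y) \<longleftrightarrow> (1 \<le> x v \<and> y = dn v x)"
  by (auto simp: up_def dn_def fun_eq_iff)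
lemma dn_eq_iff': "(1 \<le> y v \<and> x = dn v y) \<longleftrightarrow> (y = up v x)"
  by (auto simp: up_def dn_def fun_eq_iff)

definition L :: "(nat \<Rightarrow> real) \<Rightarrow> nat \<Rightarrow> state \<Rightarrow> real" where
  "L a n x = (\<Sum>u\<in>{1..n}. a u * real (x u))"

lemma L_up: "v \<in> {1..n} \<Longrightarrow> L a n (up v x) = L a n x + a v"
proof -
  assume v: "v \<in> {1..n}"
  have "L a n (up v x) = (\<Sum>u\<in>{1..n}. a u * real (x u) + (if u = v then a v else 0))"
    unfolding L_def up_def by (intro sum.cong) (auto simp: algebra_simps)
  also have "\<dots> = L a n x + a v" using v by (simp add: sum.distrib L_def)
  finally show ?thesis .
qed

lemma L_dn: "v \<in> {1..n} \<Longrightarrow> 1 \<le> x v \<Longrightarrow> L a n (dn v x) = L a n x - a v"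
proof -
  assume v: "v \<in> {1..n}" "1 \<le> x v"
  have "L a n (dn v x) = (\<Sum>u\<in>{1..n}. a u * real (x u) - (if u = v then a v else 0))"
    unfolding L_def dn_def using v by (intro sum.cong) (auto simp: algebra_simps of_nat_diff)
  also have "\<dots> = L a n x - a v" using v by (simp add: sum_subtractf L_def)
  finally show ?thesis .
qed

definition topb :: "nat \<Rightarrow> state \<Rightarrow> nat" where
  "topb n x = Max {v\<in>{1..n}. 1 \<le> x v}"

lemma states_zero: "x \<in> states n \<Longrightarrow> x = (\<lambda>_. 0) \<longleftrightarrow> (\<forall>v\<in>{1..n}. x v = 0)"
  by (auto simp: states_def fun_eq_iff)

lemma top_props:
  assumes "x \<in> states n" "x \<noteq> (\<lambda>_. 0)"
  shows "topb n x \<in> {1..n}" "1 \<le> x (topb n x)" "\<And>w. w \<in> {topb n x<..n} \<Longrightarrow> x w = 0"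
proof -
  have ne: "{v\<in>{1..n}. 1 \<le> x v} \<noteq> {}" using assms states_zero[OF assms(1)] by auto
  have fin: "finite {v\<in>{1..n}. 1 \<le> x v}" by simp
  show "topb n x \<in> {1..n}" "1 \<le> x (topb n x)" using Max_in[OF fin ne] unfolding topb_def by auto
  fix w assume w: "w \<in> {topb n x<..n}"
  show "x w = 0"
  proof (rule ccontr)
    assume "x w \<noteq> 0"
    then have "w \<in> {v\<in>{1..n}. 1 \<le> x v}" using w \<open>topb n x \<in> {1..n}\<close> by auto
    then have "w \<le> topb n x" unfolding topb_def by (rule Max_ge[OF fin])
    then show False using w by auto
  qed
qed

lemma served_iff:
  assumes "x \<in> states n" "u \<in> {1..n}"
  shows "(1 \<le> x u \<and> gamma n u x = 1) \<longleftrightarrow> (x \<noteq> (\<lambda>_. 0) \<and> u = topb n x)"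
proof
  assume h: "1 \<le> x u \<and> gamma n u x = 1"
  then have nz: "x \<noteq> (\<lambda>_. 0)" by auto
  have all0: "\<forall>w\<in>{u<..n}. x w = 0" using h gamma_eq[of u n x] assms(2) by (auto split: if_splits)
  have "u \<le> topb n x" unfolding topb_def using h assms(2) by (intro Max_ge) auto
  moreover have "topb n x \<le> u"
  proof (rule ccontr)
    assume "\<not> topb n x \<le> u"
    then have "topb n x \<in> {u<..n}" using top_props[OF assms(1) nz] by auto
    then show False using all0 top_props(2)[OF assms(1) nz] by auto
  qed
  ultimately show "x \<noteq> (\<lambda>_. 0) \<and> u = topb n x" using nz by auto
next
  assume h: "x \<noteq> (\<lambda>_. 0) \<and> u = topb n x"
  then show "1 \<le> x u \<and> gamma n u x = 1"
    using top_props[OF assms(1)] gamma_eq[of u n x] assms(2) by auto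
qed

lemma served_sum:
  assumes "x \<in> states n"
  shows "(\<Sum>u\<in>{1..n}. (if 1 \<le> x u then gamma n u x * h u else 0)) =
     (if x = (\<lambda>_. 0) then 0 else (h (topb n x) :: real))"
proof -
  have "(\<Sum>u\<in>{1..n}. (if 1 \<le> x u then gamma n u x * h u else 0)) =
        (\<Sum>u\<in>{1..n}. (if x \<noteq> (\<lambda>_. 0) \<and> u = topb n x then h u else 0))"
  proof (intro sum.cong refl)
    fix u assume u: "u \<in> {1..n}"
    show "(if 1 \<le> x u then gamma n u x * h u else 0) = (if x \<noteq> (\<lambda>_. 0) \<and> u = topb n x then h u else 0)"
      using served_iff[OF assms u] gamma_01[of n u x] by auto
  qed
  also have "\<dots> = (if x = (\<lambda>_. 0) then 0 else h (topb n x))"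
    using top_props[OF assms] by (auto simp: sum.delta)
  finally show ?thesis .
qed

context beams begin

lemma infsum_rate:
  assumes x: "x \<in> states n"
  shows "infsum (\<lambda>y. rate n lam r x y * f y) (states n - {x}) = J f x"
proof -
  have "infsum (\<lambda>y. rate n lam r x y * f y) (states n - {x}) = infsum (\<lambda>y. rate n lam r x y * f y) (Nb x)"
    using Nb_sub[OF x] rate_supp by (intro infsum_cong_neutral) auto
  also have "\<dots> = (\<Sum>y\<in>Nb x. rate n lam r x y * f y)" by (simp add: finite_Nb)
  also have "\<dots> = J f x" unfolding sum_rate[OF finite_Nb] J_def
    by (intro sum.cong refl) (auto simp: Nb_def)
  finally show ?thesis .
qed

lemma J_one: "J (\<lambda>_. 1) x = q x" unfolding J_def q_def by (intro sum.cong) auto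

lemma qout_eq: "x \<in> states n \<Longrightarrow> qout n lam r x = q x"
  unfolding qout_def using infsum_rate[of x "\<lambda>_. 1"] by (simp add: J_one)

lemma rate_zero: "y \<notin> Nb x \<Longrightarrow> rate n lam r x y = 0"
  using rate_supp by blast

lemma infsum_rate_ennreal:
  assumes x: "x \<in> states n"
  shows "infsum (\<lambda>y. ennreal (rate n lam r x y / c) * k y) (states n - {x})
     = (\<Sum>y\<in>Nb x. ennreal (rate n lam r x y / c) * k y)"
proof -
  have "infsum (\<lambda>y. ennreal (rate n lam r x y / c) * k y) (states n - {x})
     = infsum (\<lambda>y. ennreal (rate n lam r x y / c) * k y) (Nb x)"
    using Nb_sub[OF x] by (intro infsum_cong_neutral) (auto simp: rate_zero)
  then show ?thesis by (simp add: finite_Nb)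
qed

lemma In_supp: "rate n lam r y x \<noteq> 0 \<Longrightarrow> y \<in> Nb x"
proof -
  assume "rate n lam r y x \<noteq> 0"
  then have "x \<in> Nb y" by (rule rate_supp)
  then obtain v where v: "v \<in> {1..n}" "x = up v y \<or> (1 \<le> y v \<and> x = dn v y)"
    unfolding Nb_def by auto
  from v(2) show ?thesis
  proof
    assume "x = up v y"
    then have "1 \<le> x v \<and> y = dn v x" by (simp add: up_eq_iff')
    then show ?thesis using v unfolding Nb_def by auto
  next
    assume "1 \<le> y v \<and> x = dn v y"
    then have "y = up v x" using dn_eq_iff'[of y v x] by blast
    then show ?thesis using v unfolding Nb_def by auto
  qed
qed

lemma infsum_in:
  assumes x: "x \<in> states n"
  shows "infsum (\<lambda>y. \<pi> y * rate n lam r y x) (states n - {x}) = InS \<pi> x"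
proof -
  have "infsum (\<lambda>y. \<pi> y * rate n lam r y x) (states n - {x}) = infsum (\<lambda>y. \<pi> y * rate n lam r y x) (Nb x)"
    using Nb_sub[OF x] In_supp by (intro infsum_cong_neutral) auto
  also have "\<dots> = (\<Sum>y\<in>Nb x. \<pi> y * rate n lam r y x)" by (simp add: finite_Nb)
  also have "\<dots> = (\<Sum>y\<in>Nb x. \<Sum>v\<in>{1..n}. (if y = dn v x \<and> 1 \<le> x v then lam v * \<pi> y else 0)
        + (if y = up v x then r v * gamma n v y * \<pi> y else 0))"
    unfolding rate_alt sum_distrib_left
    by (intro sum.cong refl) (auto simp: up_eq_iff' dn_eq_iff' algebra_simps)
  also have "\<dots> = (\<Sum>v\<in>{1..n}. \<Sum>y\<in>Nb x. (if y = dn v x \<and> 1 \<le> x v then lam v * \<pi> y else 0)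
        + (if y = up v x then r v * gamma n v y * \<pi> y else 0))"
    by (rule sum.swap)
  also have "\<dots> = InS \<pi> x" unfolding InS_def
  proof (intro sum.cong refl)
    fix v assume v: "v \<in> {1..n}"
    have "(\<Sum>y\<in>Nb x. (if y = dn v x \<and> 1 \<le> x v then lam v * \<pi> y else 0))
       = (\<Sum>y\<in>Nb x. (if y = dn v x then (if 1 \<le> x v then lam v * \<pi> y else 0) else 0))"
      by (intro sum.cong) auto
    also have "\<dots> = (if 1 \<le> x v then lam v * \<pi> (dn v x) else 0)"
    proof (cases "1 \<le> x v")
      case True
      then have "dn v x \<in> Nb x" using v unfolding Nb_def by auto
      then show ?thesis using True finite_Nb[of x] by (simp add: sum.delta)
    next
      case False then show ?thesis by (simp add: sum.neutral)
    qed
    finally have 1: "(\<Sum>y\<in>Nb x. (if y = dn v x \<and> 1 \<le> x v then lam v * \<pi> y else 0))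
        = (if 1 \<le> x v then lam v * \<pi> (dn v x) else 0)" .
    have 2: "(\<Sum>y\<in>Nb x. (if y = up v x then r v * gamma n v y * \<pi> y else 0)) = r v * gamma n v (up v x) * \<pi> (up v x)"
      using v by (auto simp: sum.delta finite_Nb Nb_def)
    show "(\<Sum>y\<in>Nb x. (if y = dn v x \<and> 1 \<le> x v then lam v * \<pi> y else 0)
        + (if y = up v x then r v * gamma n v y * \<pi> y else 0)) =
      (if 1 \<le> x v then lam v * \<pi> (dn v x) else 0) + r v * gamma n v (up v x) * \<pi> (up v x)"
      unfolding sum.distrib 1 2 ..
  qed
  finally show ?thesis .
qed

definition Qf :: "(state \<Rightarrow> real) \<Rightarrow> state \<Rightarrow> real" where
  "Qf f x = J f x - q x * f x"

lemma Qf_eq: "Qf f x = (\<Sum>v\<in>{1..n}. lam v * (f (up v x) - f x)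
    + (if 1 \<le> x v then r v * gamma n v x * (f (dn v x) - f x) else 0))"
  unfolding Qf_def J_def q_def sum_distrib_right sum_subtractf[symmetric]
  by (intro sum.cong refl) (auto simp: algebra_simps)

lemma Qf_L:
  assumes x: "x \<in> states n"
  shows "Qf (\<lambda>y. \<phi> (L a n y)) x = (\<Sum>v\<in>{1..n}. lam v * (\<phi> (L a n x + a v) - \<phi> (L a n x)))
     + (if x = (\<lambda>_. 0) then 0 else r (topb n x) * (\<phi> (L a n x - a (topb n x)) - \<phi> (L a n x)))"
proof -
  have "Qf (\<lambda>y. \<phi> (L a n y)) x = (\<Sum>v\<in>{1..n}. lam v * (\<phi> (L a n x + a v) - \<phi> (L a n x)))
     + (\<Sum>v\<in>{1..n}. (if 1 \<le> x v then gamma n v x * (r v * (\<phi> (L a n x - a v) - \<phi> (L a n x))) else 0))"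
    unfolding Qf_eq sum.distrib by (intro arg_cong2[where f="(+)"] sum.cong refl) (auto simp: L_up L_dn)
  also have "\<dots> = (\<Sum>v\<in>{1..n}. lam v * (\<phi> (L a n x + a v) - \<phi> (L a n x)))
     + (if x = (\<lambda>_. 0) then 0 else r (topb n x) * (\<phi> (L a n x - a (topb n x)) - \<phi> (L a n x)))"
    by (subst served_sum[OF x]) simp
  finally show ?thesis .
qed

end


lemma infsum_sum_fin:
  fixes f :: "'i \<Rightarrow> 'a \<Rightarrow> real"
  assumes "finite I" "\<And>i. i \<in> I \<Longrightarrow> f i summable_on A"
  shows "(\<lambda>x. \<Sum>i\<in>I. f i x) summable_on A \<and> infsum (\<lambda>x. \<Sum>i\<in>I. f i x) A = (\<Sum>i\<in>I. infsum (f i) A)"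
  using assms
proof (induction I rule: finite_induct)
  case empty then show ?case by simp
next
  case (insert i I)
  have s1: "f i summable_on A" using insert by auto
  have s2: "(\<lambda>x. \<Sum>i\<in>I. f i x) summable_on A" using insert by auto
  show ?case using insert s1 s2
    by (simp add: summable_on_add infsum_add)
qed

lemma bij_up: "v \<in> {1..n} \<Longrightarrow> bij_betw (up v) (states n) {x\<in>states n. 1 \<le> x v}"
  unfolding bij_betw_def
proof
  show "inj_on (up v) (states n)" by (metis dn_up inj_onI)
  assume v: "v \<in> {1..n}"
  show "up v ` states n = {x \<in> states n. 1 \<le> x v}"
  proof
    show "up v ` states n \<subseteq> {x \<in> states n. 1 \<le> x v}"
    proof
      fix y assume "y \<in> up v ` states n"
      then obtain x where x: "x \<in> states n" "y = up v x" by blast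
      then show "y \<in> {x \<in> states n. 1 \<le> x v}" using up_in_states[OF x(1) v] by (simp add: up_def)
    qed
    show "{x \<in> states n. 1 \<le> x v} \<subseteq> up v ` states n"
    proof
      fix x assume x: "x \<in> {x \<in> states n. 1 \<le> x v}"
      then have "x = up v (dn v x)" by (simp add: up_dn)
      moreover have "dn v x \<in> states n" using x dn_in_states by blast
      ultimately show "x \<in> up v ` states n" by blast
    qed
  qed
qed

lemma infsum_ind:
  "infsum (\<lambda>x. if 1 \<le> x v then F x else 0) (states n) = infsum F {x\<in>states n. 1 \<le> x v}"
  by (intro infsum_cong_neutral) auto
lemma summable_ind:
  "(\<lambda>x. if 1 \<le> x v then F x else 0) summable_on (states n) \<longleftrightarrow> F summable_on {x\<in>states n. 1 \<le> x v}"
  by (intro summable_on_cong_neutral) auto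


lemma reindexA:
  fixes \<mu> g :: "state \<Rightarrow> real"
  assumes v: "v \<in> {1..n}" and h: "(\<lambda>y. \<mu> y * g (up v y)) summable_on states n"
  shows "(\<lambda>x. if 1 \<le> x v then g x * \<mu> (dn v x) else 0) summable_on states n"
    "infsum (\<lambda>x. if 1 \<le> x v then g x * \<mu> (dn v x) else 0) (states n) = infsum (\<lambda>y. \<mu> y * g (up v y)) (states n)"
proof -
  have e: "(\<lambda>y. g (up v y) * \<mu> (dn v (up v y))) = (\<lambda>y. \<mu> y * g (up v y))"
    unfolding dn_up by (rule ext) (rule mult.commute)
  have "infsum (\<lambda>x. if 1 \<le> x v then g x * \<mu> (dn v x) else 0) (states n) = infsum (\<lambda>x. g x * \<mu> (dn v x)) {x\<in>states n. 1 \<le> x v}"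
    by (rule infsum_ind)
  also have "\<dots> = infsum (\<lambda>y. g (up v y) * \<mu> (dn v (up v y))) (states n)"
    by (rule infsum_reindex_bij_betw[OF bij_up[OF v], symmetric])
  finally show "infsum (\<lambda>x. if 1 \<le> x v then g x * \<mu> (dn v x) else 0) (states n) = infsum (\<lambda>y. \<mu> y * g (up v y)) (states n)"
    unfolding e .
  have "(\<lambda>y. g (up v y) * \<mu> (dn v (up v y))) summable_on (states n)"
    using h unfolding e .
  then have "(\<lambda>x. g x * \<mu> (dn v x)) summable_on {x\<in>states n. 1 \<le> x v}"
    using summable_on_reindex_bij_betw[OF bij_up[OF v]] by blast
  then show "(\<lambda>x. if 1 \<le> x v then g x * \<mu> (dn v x) else 0) summable_on states n" unfolding summable_ind .
qed

lemma reindexB: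
  fixes c g :: "state \<Rightarrow> real"
  assumes v: "v \<in> {1..n}" and h: "(\<lambda>y. if 1 \<le> y v then c y * g (dn v y) else 0) summable_on states n"
  shows "(\<lambda>x. c (up v x) * g x) summable_on states n"
    "infsum (\<lambda>x. c (up v x) * g x) (states n) = infsum (\<lambda>y. if 1 \<le> y v then c y * g (dn v y) else 0) (states n)"
proof -
  have e: "(\<lambda>x. c (up v x) * g (dn v (up v x))) = (\<lambda>x. c (up v x) * g x)"
    by (simp add: dn_up)
  have "infsum (\<lambda>y. if 1 \<le> y v then c y * g (dn v y) else 0) (states n) = infsum (\<lambda>y. c y * g (dn v y)) {x\<in>states n. 1 \<le> x v}"
    by (rule infsum_ind)
  also have "\<dots> = infsum (\<lambda>x. c (up v x) * g (dn v (up v x))) (states n)"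
    by (rule infsum_reindex_bij_betw[OF bij_up[OF v], symmetric])
  finally show "infsum (\<lambda>x. c (up v x) * g x) (states n) = infsum (\<lambda>y. if 1 \<le> y v then c y * g (dn v y) else 0) (states n)"
    unfolding e ..
  have "(\<lambda>y. c y * g (dn v y)) summable_on {x\<in>states n. 1 \<le> x v}"
    using h unfolding summable_ind .
  then have "(\<lambda>x. c (up v x) * g (dn v (up v x))) summable_on (states n)"
    by (rule summable_on_reindex_bij_betw[OF bij_up[OF v], THEN iffD2])
  then show "(\<lambda>x. c (up v x) * g x) summable_on states n" unfolding e .
qed


context beams begin

lemma swap:
  assumes h1: "\<And>v. v\<in>{1..n} \<Longrightarrow> (\<lambda>y. \<mu> y * g (up v y)) summable_on states n"
    and h2: "\<And>v. v\<in>{1..n} \<Longrightarrow> (\<lambda>y. if 1 \<le> y v then gamma n v y * \<mu> y * g (dn v y) else 0) summable_on states n"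
  shows "(\<lambda>x. g x * InS \<mu> x) summable_on states n" "(\<lambda>y. \<mu> y * J g y) summable_on states n"
    "infsum (\<lambda>x. g x * InS \<mu> x) (states n) = infsum (\<lambda>y. \<mu> y * J g y) (states n)"
proof -
  let ?A = "\<lambda>v x. if 1 \<le> x v then g x * \<mu> (dn v x) else 0"
  let ?B = "\<lambda>v x. gamma n v (up v x) * \<mu> (up v x) * g x"
  let ?h1 = "\<lambda>v y. \<mu> y * g (up v y)"
  let ?h2 = "\<lambda>v y. if 1 \<le> y v then gamma n v y * \<mu> y * g (dn v y) else 0"
  note RA = reindexA[OF _ h1]
  note RB = reindexB[where c="\<lambda>y. gamma n v y * \<mu> y" and g=g and v=v for v, OF _ h2]
  have L: "(\<lambda>x. g x * InS \<mu> x) = (\<lambda>x. \<Sum>v\<in>{1..n}. lam v * ?A v x + r v * ?B v x)"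
    unfolding InS_def sum_distrib_left by (intro ext sum.cong) (auto simp: algebra_simps)
  have R: "(\<lambda>y. \<mu> y * J g y) = (\<lambda>y. \<Sum>v\<in>{1..n}. lam v * ?h1 v y + r v * ?h2 v y)"
    unfolding J_def sum_distrib_left by (intro ext sum.cong) (auto simp: algebra_simps)
  have sL: "\<And>v. v \<in> {1..n} \<Longrightarrow> (\<lambda>x. lam v * ?A v x + r v * ?B v x) summable_on states n"
    using RA(1) RB(1) by (intro summable_on_add summable_on_cmult_right) auto
  have sR: "\<And>v. v \<in> {1..n} \<Longrightarrow> (\<lambda>x. lam v * ?h1 v x + r v * ?h2 v x) summable_on states n"
    using h1 h2 by (intro summable_on_add summable_on_cmult_right) auto
  have IL: "(\<lambda>x. \<Sum>v\<in>{1..n}. lam v * ?A v x + r v * ?B v x) summable_on states n \<and>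
     infsum (\<lambda>x. \<Sum>v\<in>{1..n}. lam v * ?A v x + r v * ?B v x) (states n) =
     (\<Sum>v\<in>{1..n}. infsum (\<lambda>x. lam v * ?A v x + r v * ?B v x) (states n))"
    by (rule infsum_sum_fin) (use sL in auto)
  have IR: "(\<lambda>x. \<Sum>v\<in>{1..n}. lam v * ?h1 v x + r v * ?h2 v x) summable_on states n \<and>
     infsum (\<lambda>x. \<Sum>v\<in>{1..n}. lam v * ?h1 v x + r v * ?h2 v x) (states n) =
     (\<Sum>v\<in>{1..n}. infsum (\<lambda>x. lam v * ?h1 v x + r v * ?h2 v x) (states n))"
    by (rule infsum_sum_fin) (use sR in auto)
  show "(\<lambda>x. g x * InS \<mu> x) summable_on states n" unfolding L using IL by blast
  show "(\<lambda>y. \<mu> y * J g y) summable_on states n" unfolding R using IR by blast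
  have eq: "infsum (\<lambda>x. lam v * ?A v x + r v * ?B v x) (states n) = infsum (\<lambda>x. lam v * ?h1 v x + r v * ?h2 v x) (states n)"
    if v: "v \<in> {1..n}" for v
  proof -
    have a1: "(\<lambda>x. lam v * ?A v x) summable_on states n" using RA(1)[OF v v] by (rule summable_on_cmult_right)
    have b1: "(\<lambda>x. r v * ?B v x) summable_on states n" using RB(1)[OF v v] by (simp add: summable_on_cmult_right mult.assoc)
    have "infsum (\<lambda>x. lam v * ?A v x + r v * ?B v x) (states n) = lam v * infsum (?A v) (states n) + r v * infsum (?B v) (states n)"
      unfolding infsum_add[OF a1 b1] using RA(1)[OF v v] RB(1)[OF v v]
      by (simp add: infsum_cmult_right mult.assoc)
    also have "\<dots> = lam v * infsum (?h1 v) (states n) + r v * infsum (?h2 v) (states n)"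
      using RA(2)[OF v v] RB(2)[OF v v] by (simp add: mult.assoc)
    also have "\<dots> = infsum (\<lambda>x. lam v * ?h1 v x + r v * ?h2 v x) (states n)"
    proof -
      have a1: "(\<lambda>x. lam v * ?h1 v x) summable_on states n" using h1[OF v] by (rule summable_on_cmult_right)
      have b1: "(\<lambda>x. r v * ?h2 v x) summable_on states n" using h2[OF v] by (rule summable_on_cmult_right)
      show ?thesis unfolding infsum_add[OF a1 b1] using h1[OF v] h2[OF v]
        by (simp add: infsum_cmult_right)
    qed
    finally show ?thesis .
  qed
  show "infsum (\<lambda>x. g x * InS \<mu> x) (states n) = infsum (\<lambda>y. \<mu> y * J g y) (states n)"
    unfolding L R using IL IR eq by simp
qed

end


lemma summable_bound:
  fixes f g :: "'a \<Rightarrow> real"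
  assumes "g summable_on A" "\<And>x. x\<in>A \<Longrightarrow> \<bar>f x\<bar> \<le> g x"
  shows "f summable_on A"
proof -
  note a = summable_on_iff_abs_summable_on_real[THEN iffD1, OF assms(1)]
  have b: "norm (f x) \<le> norm (g x)" if "x \<in> A" for x
    unfolding real_norm_def using assms(2)[OF that] abs_ge_self[of "g x"] by linarith
  show ?thesis
    by (rule summable_on_iff_abs_summable_on_real[THEN iffD2, OF Infinite_Sum.abs_summable_on_comparison_test[OF a b]])
qed

lemma summable_on_diff_r:
  fixes f g :: "'a \<Rightarrow> real"
  assumes "f summable_on A" "g summable_on A"
  shows "(\<lambda>x. f x - g x) summable_on A"
proof -
  have "(\<lambda>x. f x + (- g x)) summable_on A"
    using assms by (intro summable_on_add summable_on_uminus[THEN iffD2])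
  then show ?thesis by simp
qed

lemma infsum_diff_r:
  fixes f g :: "'a \<Rightarrow> real"
  assumes "f summable_on A" "g summable_on A"
  shows "infsum (\<lambda>x. f x - g x) A = infsum f A - infsum g A"
proof -
  have s: "(\<lambda>x. - g x) summable_on A" using assms by (intro summable_on_uminus[THEN iffD2])
  have "infsum (\<lambda>x. f x + (- g x)) A = infsum f A + infsum (\<lambda>x. - g x) A"
    by (rule infsum_add[OF assms(1) s])
  then show ?thesis by (simp add: infsum_uminus)
qed

context beams begin

lemma lam_nn: "v \<in> {1..n} \<Longrightarrow> 0 \<le> lam v" using lam_pos by (simp add: less_imp_le)
lemma r_nn: "v \<in> {1..n} \<Longrightarrow> 0 \<le> r v" using r_pos by (simp add: less_imp_le)
lemma rg_nn: "v \<in> {1..n} \<Longrightarrow> 0 \<le> r v * gamma n v x" using r_nn gamma_nonneg by (simp add: mult_nonneg_nonneg)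

definition qM :: real where "qM = (\<Sum>v\<in>{1..n}. lam v + r v)"

lemma q_nonneg: "0 \<le> q x"
  unfolding q_def using lam_nn rg_nn
  by (intro sum_nonneg add_nonneg_nonneg) auto

lemma q_le: "q x \<le> qM"
  unfolding q_def qM_def
proof (intro sum_mono add_left_mono)
  fix v assume v: "v \<in> {1..n}"
  show "(if 1 \<le> x v then r v * gamma n v x else 0) \<le> r v"
    using r_pos[OF v] gamma_le1[of n v x] gamma_nonneg[of n v x]
    by (auto simp: mult_le_cancel_left1)
qed

lemma q_pos: "0 < q x"
proof -
  have "lam 1 \<le> (\<Sum>v\<in>{1..n}. lam v + (if 1 \<le> x v then r v * gamma n v x else 0))"
  proof -
    have "lam 1 \<le> lam 1 + (if 1 \<le> x 1 then r 1 * gamma n 1 x else 0)"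
      using r_pos[of 1] n1 gamma_nonneg[of n 1 x] by auto
    also have "\<dots> \<le> (\<Sum>v\<in>{1..n}. lam v + (if 1 \<le> x v then r v * gamma n v x else 0))"
      using n1 lam_nn rg_nn
      by (intro member_le_sum) (auto intro!: add_nonneg_nonneg)
    finally show ?thesis .
  qed
  then show ?thesis unfolding q_def using lam_pos[of 1] n1 by auto
qed

lemma stat_balance:
  assumes "stationary n lam r \<pi>" "x \<in> states n"
  shows "\<pi> x * q x = InS \<pi> x"
  using assms unfolding stationary_def by (simp add: qout_eq infsum_in)

lemma test:
  assumes st: "stationary n lam r \<pi>" and sG: "(\<lambda>y. \<pi> y * G y) summable_on states n"
    and b0: "\<And>y. y \<in> states n \<Longrightarrow> \<bar>g y\<bar> \<le> G y"
    and bu: "\<And>y v. y \<in> states n \<Longrightarrow> v \<in> {1..n} \<Longrightarrow> \<bar>g (up v y)\<bar> \<le> G y"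
    and bd: "\<And>y v. y \<in> states n \<Longrightarrow> v \<in> {1..n} \<Longrightarrow> 1 \<le> y v \<Longrightarrow> \<bar>g (dn v y)\<bar> \<le> G y"
  shows "(\<lambda>y. \<pi> y * Qf g y) summable_on states n" "infsum (\<lambda>y. \<pi> y * Qf g y) (states n) = 0"
proof -
  have pnn: "\<And>y. 0 \<le> \<pi> y" using st unfolding stationary_def by auto
  have h1: "(\<lambda>y. \<pi> y * g (up v y)) summable_on states n" if v: "v \<in> {1..n}" for v
  proof (rule summable_bound[OF sG])
    fix y assume y: "y \<in> states n"
    have "\<bar>\<pi> y * g (up v y)\<bar> = \<pi> y * \<bar>g (up v y)\<bar>" using pnn[of y] by (simp add: abs_mult)
    also have "\<dots> \<le> \<pi> y * G y" by (rule mult_left_mono[OF bu[OF y v] pnn])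
    finally show "\<bar>\<pi> y * g (up v y)\<bar> \<le> \<pi> y * G y" .
  qed
  have h2: "(\<lambda>y. if 1 \<le> y v then gamma n v y * \<pi> y * g (dn v y) else 0) summable_on states n" if v: "v \<in> {1..n}" for v
  proof (rule summable_bound[OF sG])
    fix y assume y: "y \<in> states n"
    show "\<bar>if 1 \<le> y v then gamma n v y * \<pi> y * g (dn v y) else 0\<bar> \<le> \<pi> y * G y"
    proof (cases "1 \<le> y v")
      case True
      have "\<bar>gamma n v y * \<pi> y * g (dn v y)\<bar> = gamma n v y * (\<pi> y * \<bar>g (dn v y)\<bar>)"
        using pnn gamma_nonneg by (simp add: abs_mult)
      also have "\<dots> \<le> 1 * (\<pi> y * G y)"
      proof (rule mult_mono)
        show "gamma n v y \<le> 1" by (rule gamma_le1)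
        show "\<pi> y * \<bar>g (dn v y)\<bar> \<le> \<pi> y * G y" by (rule mult_left_mono[OF bd[OF y v True] pnn])
        show "0 \<le> (1::real)" by simp
        show "0 \<le> \<pi> y * \<bar>g (dn v y)\<bar>" using pnn[of y] by simp
      qed
      finally show ?thesis using True by simp
    next
      case False
      then show ?thesis using pnn[of y] b0[OF y] by auto
    qed
  qed
  note S = swap[OF h1 h2]
  have sq: "(\<lambda>y. \<pi> y * q y * g y) summable_on states n"
  proof (rule summable_bound)
    show "(\<lambda>y. qM * (\<pi> y * G y)) summable_on states n" using sG by (rule summable_on_cmult_right)
    fix y assume y: "y \<in> states n"
    have "\<bar>\<pi> y * q y * g y\<bar> = q y * (\<pi> y * \<bar>g y\<bar>)" using pnn q_nonneg by (simp add: abs_mult)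
    also have "\<dots> \<le> qM * (\<pi> y * G y)"
    proof (rule mult_mono)
      show "q y \<le> qM" by (rule q_le)
      show "\<pi> y * \<bar>g y\<bar> \<le> \<pi> y * G y" by (rule mult_left_mono[OF b0[OF y] pnn])
      show "0 \<le> qM" using q_le[of y] q_nonneg[of y] by simp
      show "0 \<le> \<pi> y * \<bar>g y\<bar>" using pnn[of y] by simp
    qed
    finally show "\<bar>\<pi> y * q y * g y\<bar> \<le> qM * (\<pi> y * G y)" .
  qed
  have eqq: "infsum (\<lambda>x. g x * InS \<pi> x) (states n) = infsum (\<lambda>y. \<pi> y * q y * g y) (states n)"
    by (intro infsum_cong) (simp add: stat_balance[OF st] mult.commute)
  have QQ: "(\<lambda>y. \<pi> y * Qf g y) = (\<lambda>y. \<pi> y * J g y - \<pi> y * q y * g y)"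
    unfolding Qf_def by (auto simp: algebra_simps)
  show "(\<lambda>y. \<pi> y * Qf g y) summable_on states n" unfolding QQ
    using S(2) sq by (intro summable_on_diff_r) auto
  show "infsum (\<lambda>y. \<pi> y * Qf g y) (states n) = 0" unfolding QQ
    using S(2,3) sq eqq by (simp add: infsum_diff_r)
qed

end


lemma sq_arr: fixes w M a :: real shows "0 \<le> w \<Longrightarrow> w < M \<Longrightarrow> 0 \<le> a \<Longrightarrow> (min (w+a) M)^2 - (min w M)^2 \<le> 2*w*a + a^2"
proof -
  assume h: "0 \<le> w" "w < M" "0 \<le> a"
  have "min (w+a) M ^2 \<le> (w+a)^2" using h by (intro power_mono) auto
  then show ?thesis using h by (simp add: power2_eq_square algebra_simps)
qed

lemma sq_arr_big: fixes w M a :: real shows "M \<le> w \<Longrightarrow> 0 \<le> a \<Longrightarrow> (min (w+a) M)^2 - (min w M)^2 = (0::real)"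
  by (simp add: min_def)

lemma sq_dep_big: fixes w M a :: real shows "0 \<le> M \<Longrightarrow> M \<le> w \<Longrightarrow> 0 \<le> w - a \<Longrightarrow> (min (w-a) M)^2 - (min w M)^2 \<le> (0::real)"
proof -
  assume h: "0 \<le> M" "M \<le> w" "0 \<le> w - a"
  have "min (w-a) M ^2 \<le> M^2" using h by (intro power_mono) auto
  then show ?thesis using h by (simp add: min_def)
qed

lemma sq_dep: fixes w M a :: real shows "w < M \<Longrightarrow> 0 \<le> a \<Longrightarrow> (min (w-a) M)^2 - (min w M)^2 = a^2 - 2*w*(a::real)"
  by (simp add: min_def power2_eq_square algebra_simps)

lemma cu_arr: fixes w M a :: real shows "0 \<le> w \<Longrightarrow> w < M \<Longrightarrow> 0 \<le> a \<Longrightarrow> (min (w+a) M)^3 - (min w M)^3 \<le> 3*w^2*a + 3*w*a^2 + (a::real)^3"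
proof -
  assume h: "0 \<le> w" "w < M" "0 \<le> a"
  have "min (w+a) M ^3 \<le> (w+a)^3" using h by (intro power_mono) auto
  then show ?thesis using h by (simp add: power3_eq_cube power2_eq_square algebra_simps)
qed

lemma cu_arr_big: fixes w M a :: real shows "M \<le> w \<Longrightarrow> 0 \<le> a \<Longrightarrow> (min (w+a) M)^3 - (min w M)^3 = (0::real)"
  by (simp add: min_def)

lemma cu_dep_big: fixes w M a :: real shows "0 \<le> M \<Longrightarrow> M \<le> w \<Longrightarrow> 0 \<le> w - a \<Longrightarrow> (min (w-a) M)^3 - (min w M)^3 \<le> (0::real)"
proof -
  assume h: "0 \<le> M" "M \<le> w" "0 \<le> w - a"
  have "min (w-a) M ^3 \<le> M^3" using h by (intro power_mono) auto
  then show ?thesis using h by (simp add: min_def)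
qed

lemma cu_dep: fixes w M a :: real shows "w < M \<Longrightarrow> 0 \<le> a \<Longrightarrow> (min (w-a) M)^3 - (min w M)^3 = - 3*w^2*a + 3*w*a^2 - (a::real)^3"
  by (simp add: min_def power3_eq_cube power2_eq_square algebra_simps)


context beams begin

definition a1 :: "nat \<Rightarrow> real" where "a1 u = 1 / r u"
definition V :: "state \<Rightarrow> real" where "V = L a1 n"
definition S :: real where "S = (\<Sum>v\<in>{1..n}. lam v * a1 v)"
definition A1 :: real where "A1 = (\<Sum>v\<in>{1..n}. a1 v)"
definition A2 :: real where "A2 = (\<Sum>v\<in>{1..n}. lam v * a1 v ^ 2)"
definition A3 :: real where "A3 = (\<Sum>v\<in>{1..n}. lam v * a1 v ^ 3)"

lemma a1_pos: "u \<in> {1..n} \<Longrightarrow> 0 < a1 u" using r_pos by (simp add: a1_def)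
lemma r_a1: "u \<in> {1..n} \<Longrightarrow> r u * a1 u = 1" using r_pos[of u] by (simp add: a1_def)
lemma a1_le: "u \<in> {1..n} \<Longrightarrow> a1 u \<le> A1"
  unfolding A1_def using a1_pos by (intro member_le_sum) (auto simp: less_imp_le)
lemma A1_nn: "0 \<le> A1" unfolding A1_def using a1_pos by (intro sum_nonneg) (auto simp: less_imp_le)
lemma A2_nn: "0 \<le> A2" unfolding A2_def using a1_pos lam_nn by (intro sum_nonneg) (auto simp: less_imp_le)
lemma A3_nn: "0 \<le> A3" unfolding A3_def using a1_pos lam_nn by (intro sum_nonneg) (auto simp: less_imp_le)

lemma V_nonneg: "0 \<le> V y"
  unfolding V_def L_def using a1_pos by (intro sum_nonneg) (auto simp: less_imp_le)

lemma V_zero: "V (\<lambda>_. 0) = 0" unfolding V_def L_def by simp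

lemma V_top:
  assumes "y \<in> states n" "y \<noteq> (\<lambda>_. 0)"
  shows "a1 (topb n y) \<le> V y"
proof -
  have t: "topb n y \<in> {1..n}" "1 \<le> y (topb n y)" using top_props[OF assms] by auto
  have "a1 (topb n y) \<le> a1 (topb n y) * real (y (topb n y))"
    using t a1_pos[OF t(1)] by (simp add: mult_le_cancel_left1)
  also have "\<dots> \<le> V y" unfolding V_def L_def
    using t a1_pos by (intro member_le_sum[where f="\<lambda>u. a1 u * real (y u)"]) (auto simp: less_imp_le)
  finally show ?thesis .
qed

lemma Q_sq:
  assumes y: "y \<in> states n" and M: "0 \<le> M"
  shows "Qf (\<lambda>z. (min (V z) M)^2) y \<le> (if V y < M then A1 + A2 - 2*(1-S)*V y else 0)"
proof -
  define t where "t = topb n y"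
  have Q: "Qf (\<lambda>z. (min (V z) M)^2) y = (\<Sum>v\<in>{1..n}. lam v * ((min (V y + a1 v) M)^2 - (min (V y) M)^2))
     + (if y = (\<lambda>_. 0) then 0 else r t * ((min (V y - a1 t) M)^2 - (min (V y) M)^2))"
    unfolding V_def t_def by (rule Qf_L[OF y])
  show ?thesis
  proof (cases "V y < M")
    case True
    have arr: "(\<Sum>v\<in>{1..n}. lam v * ((min (V y + a1 v) M)^2 - (min (V y) M)^2)) \<le> (\<Sum>v\<in>{1..n}. lam v * (2 * V y * a1 v + a1 v^2))"
      using lam_nn a1_pos V_nonneg True by (intro sum_mono mult_left_mono sq_arr) (auto simp: less_imp_le)
    also have "\<dots> = 2 * V y * S + A2" unfolding S_def A2_def
      by (simp add: sum_distrib_left sum.distrib algebra_simps)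
    finally have arr': "(\<Sum>v\<in>{1..n}. lam v * ((min (V y + a1 v) M)^2 - (min (V y) M)^2)) \<le> 2 * V y * S + A2" .
    show ?thesis
    proof (cases "y = (\<lambda>_. 0)")
      case True
      then show ?thesis using Q arr' \<open>V y < M\<close> A1_nn by (simp add: V_zero)
    next
      case False
      have t: "t \<in> {1..n}" using top_props[OF y False] t_def by auto
      have "r t * ((min (V y - a1 t) M)^2 - (min (V y) M)^2) = r t * (a1 t ^2 - 2 * V y * a1 t)"
        using sq_dep[OF \<open>V y < M\<close>, of "a1 t"] a1_pos[OF t] by simp
      also have "\<dots> = (r t * a1 t) * (a1 t - 2 * V y)" by (simp add: power2_eq_square algebra_simps)
      also have "\<dots> = a1 t - 2 * V y" using r_a1[OF t] by simp
      finally have "r t * ((min (V y - a1 t) M)^2 - (min (V y) M)^2) \<le> A1 - 2 * V y" using a1_le[OF t] by simp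
      then show ?thesis using Q arr' False True by (simp add: algebra_simps)
    qed
  next
    case False
    have arr: "(\<Sum>v\<in>{1..n}. lam v * ((min (V y + a1 v) M)^2 - (min (V y) M)^2)) = 0"
    proof (intro sum.neutral ballI)
      fix v assume v: "v \<in> {1..n}"
      have "M \<le> V y + a1 v" "M \<le> V y" using False a1_pos[OF v] by auto
      then show "lam v * ((min (V y + a1 v) M)^2 - (min (V y) M)^2) = 0" by (simp add: min_absorb2)
    qed
    have dep: "(if y = (\<lambda>_. 0) then 0 else r t * ((min (V y - a1 t) M)^2 - (min (V y) M)^2)) \<le> 0"
    proof (cases "y = (\<lambda>_. 0)")
      case False
      have t: "t \<in> {1..n}" using top_props[OF y False] t_def by auto
      have "(min (V y - a1 t) M)^2 - (min (V y) M)^2 \<le> 0"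
        using sq_dep_big[OF M, of "V y" "a1 t"] \<open>\<not> V y < M\<close> V_top[OF y False] t_def by simp
      then show ?thesis using False r_nn[OF t] by (simp add: mult_nonneg_nonpos)
    qed simp
    show ?thesis using Q arr dep False by simp
  qed
qed

lemma Q_cu:
  assumes y: "y \<in> states n" and M: "0 \<le> M"
  shows "Qf (\<lambda>z. (min (V z) M)^3) y \<le> (if V y < M then A3 + 3*(A1 + A2) * V y - 3*(1-S)*(V y)^2 else 0)"
proof -
  define t where "t = topb n y"
  have Q: "Qf (\<lambda>z. (min (V z) M)^3) y = (\<Sum>v\<in>{1..n}. lam v * ((min (V y + a1 v) M)^3 - (min (V y) M)^3))
     + (if y = (\<lambda>_. 0) then 0 else r t * ((min (V y - a1 t) M)^3 - (min (V y) M)^3))"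
    unfolding V_def t_def by (rule Qf_L[OF y])
  show ?thesis
  proof (cases "V y < M")
    case True
    have arr: "(\<Sum>v\<in>{1..n}. lam v * ((min (V y + a1 v) M)^3 - (min (V y) M)^3)) \<le> (\<Sum>v\<in>{1..n}. lam v * (3 * (V y)^2 * a1 v + 3 * V y * a1 v^2 + a1 v^3))"
      using lam_nn a1_pos V_nonneg True by (intro sum_mono mult_left_mono cu_arr) (auto simp: less_imp_le)
    also have "\<dots> = 3 * (V y)^2 * S + 3 * V y * A2 + A3" unfolding S_def A2_def A3_def
      by (simp add: sum_distrib_left sum.distrib algebra_simps)
    finally have arr': "(\<Sum>v\<in>{1..n}. lam v * ((min (V y + a1 v) M)^3 - (min (V y) M)^3)) \<le> 3 * (V y)^2 * S + 3 * V y * A2 + A3" .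
    show ?thesis
    proof (cases "y = (\<lambda>_. 0)")
      case True
      then show ?thesis using Q arr' \<open>V y < M\<close> A1_nn by (simp add: V_zero)
    next
      case False
      have t: "t \<in> {1..n}" using top_props[OF y False] t_def by auto
      have "r t * ((min (V y - a1 t) M)^3 - (min (V y) M)^3) = r t * (- 3 * (V y)^2 * a1 t + 3 * V y * a1 t^2 - a1 t^3)"
        using cu_dep[OF \<open>V y < M\<close>, of "a1 t"] a1_pos[OF t] by simp
      also have "\<dots> = (r t * a1 t) * (- 3 * (V y)^2 + 3 * V y * a1 t - a1 t^2)"
        by (simp add: power2_eq_square power3_eq_cube algebra_simps)
      also have "\<dots> = - 3 * (V y)^2 + 3 * V y * a1 t - a1 t^2" using r_a1[OF t] by simp
      also have "\<dots> \<le> - 3 * (V y)^2 + 3 * V y * A1"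
      proof -
        have "3 * V y * a1 t \<le> 3 * V y * A1" using a1_le[OF t] V_nonneg[of y] by (intro mult_left_mono) auto
        then show ?thesis using zero_le_power2[of "a1 t"] by linarith
      qed
      finally have "r t * ((min (V y - a1 t) M)^3 - (min (V y) M)^3) \<le> - 3 * (V y)^2 + 3 * V y * A1" .
      then show ?thesis using Q arr' False True by (simp add: algebra_simps)
    qed
  next
    case False
    have arr: "(\<Sum>v\<in>{1..n}. lam v * ((min (V y + a1 v) M)^3 - (min (V y) M)^3)) = 0"
    proof (intro sum.neutral ballI)
      fix v assume v: "v \<in> {1..n}"
      have "M \<le> V y + a1 v" "M \<le> V y" using False a1_pos[OF v] by auto
      then show "lam v * ((min (V y + a1 v) M)^3 - (min (V y) M)^3) = 0" by (simp add: min_absorb2)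
    qed
    have dep: "(if y = (\<lambda>_. 0) then 0 else r t * ((min (V y - a1 t) M)^3 - (min (V y) M)^3)) \<le> 0"
    proof (cases "y = (\<lambda>_. 0)")
      case False
      have t: "t \<in> {1..n}" using top_props[OF y False] t_def by auto
      have "(min (V y - a1 t) M)^3 - (min (V y) M)^3 \<le> 0"
        using cu_dep_big[OF M, of "V y" "a1 t"] \<open>\<not> V y < M\<close> V_top[OF y False] t_def by simp
      then show ?thesis using False r_nn[OF t] by (simp add: mult_nonneg_nonpos)
    qed simp
    show ?thesis using Q arr dep False by simp
  qed
qed

end


context beams begin

lemma stat_nn: "stationary n lam r \<pi> \<Longrightarrow> 0 \<le> \<pi> y"
  unfolding stationary_def by auto
lemma stat_sum: "stationary n lam r \<pi> \<Longrightarrow> \<pi> summable_on states n"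
  unfolding stationary_def using summable_on_def by blast
lemma stat_one: "stationary n lam r \<pi> \<Longrightarrow> infsum \<pi> (states n) = 1"
  unfolding stationary_def using infsumI by blast

lemma bsumm:
  assumes "stationary n lam r \<pi>" "\<And>y. y \<in> states n \<Longrightarrow> \<bar>f y\<bar> \<le> C * \<pi> y"
  shows "f summable_on states n"
  by (rule summable_bound[OF summable_on_cmult_right[OF stat_sum[OF assms(1)]]]) (use assms(2) in auto)

lemma ind_le1:
  assumes st: "stationary n lam r \<pi>"
  shows "infsum (\<lambda>y. \<pi> y * (if P y then 1 else 0)) (states n) \<le> 1"
proof -
  have "infsum (\<lambda>y. \<pi> y * (if P y then 1 else 0)) (states n) \<le> infsum \<pi> (states n)"
    using stat_nn[OF st] by (intro infsum_mono bsumm[OF st, of _ 1] stat_sum[OF st]) auto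
  then show ?thesis using stat_one[OF st] by simp
qed

lemma moment_from_trunc:
  assumes st: "stationary n lam r \<pi>" and hnn: "\<And>y. y \<in> states n \<Longrightarrow> 0 \<le> h y"
    and tr: "\<And>M. 0 \<le> M \<Longrightarrow> (\<lambda>y. \<pi> y * (if V y < M then h y else 0)) summable_on states n \<and>
        infsum (\<lambda>y. \<pi> y * (if V y < M then h y else 0)) (states n) \<le> B"
  shows "(\<lambda>y. \<pi> y * h y) summable_on states n" "infsum (\<lambda>y. \<pi> y * h y) (states n) \<le> B"
proof -
  have fin: "sum (\<lambda>y. \<pi> y * h y) F \<le> B" if F: "finite F" "F \<subseteq> states n" for F
  proof -
    define M where "M = Max (insert 0 (V ` F)) + 1"
    have M0: "0 \<le> M" unfolding M_def using F by (simp add: le_max_iff_disj)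
    have VM: "V y < M" if "y \<in> F" for y
    proof -
      have "V y \<le> Max (insert 0 (V ` F))" using F that by (intro Max_ge) auto
      then show ?thesis unfolding M_def by simp
    qed
    have "sum (\<lambda>y. \<pi> y * h y) F = sum (\<lambda>y. \<pi> y * (if V y < M then h y else 0)) F"
      using VM by (intro sum.cong) auto
    also have "\<dots> \<le> infsum (\<lambda>y. \<pi> y * (if V y < M then h y else 0)) (states n)"
      using tr[OF M0] F stat_nn[OF st] hnn by (intro finite_sum_le_infsum) auto
    also have "\<dots> \<le> B" using tr[OF M0] by blast
    finally show ?thesis .
  qed
  show s: "(\<lambda>y. \<pi> y * h y) summable_on states n"
  proof (rule nonneg_bdd_above_summable_on)
    show "\<And>y. y \<in> states n \<Longrightarrow> 0 \<le> \<pi> y * h y" using stat_nn[OF st] hnn by simp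
    show "bdd_above (sum (\<lambda>y. \<pi> y * h y) ` {F. F \<subseteq> states n \<and> finite F})"
      using fin by (auto intro!: bdd_aboveI)
  qed
  show "infsum (\<lambda>y. \<pi> y * h y) (states n) \<le> B"
    using s fin by (intro infsum_le_finite_sums) auto
qed

lemma min_bounds: "0 \<le> M \<Longrightarrow> 0 \<le> min (V y) M \<and> min (V y) M \<le> M"
  using V_nonneg[of y] by simp

definition EB1 :: real where "EB1 = (A1 + A2) / (2 * (1 - S))"

lemma EV:
  assumes st: "stationary n lam r \<pi>" and S1: "S < 1"
  shows "(\<lambda>y. \<pi> y * V y) summable_on states n" "infsum (\<lambda>y. \<pi> y * V y) (states n) \<le> EB1"
proof -
  have tr: "(\<lambda>y. \<pi> y * (if V y < M then V y else 0)) summable_on states n \<and>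
        infsum (\<lambda>y. \<pi> y * (if V y < M then V y else 0)) (states n) \<le> EB1" if M0: "0 \<le> M" for M
  proof
    let ?g = "\<lambda>z. (min (V z) M)^2"
    have gb: "\<bar>?g z\<bar> \<le> M^2" for z using min_bounds[OF M0, of z] by (simp add: power_mono)
    have sG: "(\<lambda>y. \<pi> y * M^2) summable_on states n" by (rule summable_on_cmult_left[OF stat_sum[OF st]])
    have b0: "\<And>y. y \<in> states n \<Longrightarrow> \<bar>?g y\<bar> \<le> M^2" using gb by blast
    have bu: "\<And>y v. y \<in> states n \<Longrightarrow> v \<in> {1..n} \<Longrightarrow> \<bar>?g (up v y)\<bar> \<le> M^2" using gb by blast
    have bd: "\<And>y v. y \<in> states n \<Longrightarrow> v \<in> {1..n} \<Longrightarrow> 1 \<le> y v \<Longrightarrow> \<bar>?g (dn v y)\<bar> \<le> M^2" using gb by blast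
    note T = test[OF st sG b0 bu bd]
    show s1: "(\<lambda>y. \<pi> y * (if V y < M then V y else 0)) summable_on states n"
    proof (rule bsumm[OF st, of _ M])
      fix y assume y: "y \<in> states n"
      have p: "0 \<le> \<pi> y" "0 \<le> V y" using stat_nn[OF st] V_nonneg by auto
      show "\<bar>\<pi> y * (if V y < M then V y else 0)\<bar> \<le> M * \<pi> y"
      proof (cases "V y < M")
        case True
        have "\<pi> y * V y \<le> \<pi> y * M" using True p by (intro mult_left_mono) auto
        then show ?thesis using True p by (simp add: abs_mult mult.commute)
      next
        case False then show ?thesis using p M0 by simp
      qed
    qed
    have s0: "(\<lambda>y. \<pi> y * (if V y < M then 1 else 0)) summable_on states n"
      by (rule bsumm[OF st, of _ 1]) (use stat_nn[OF st] in auto)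
    have h: "\<pi> y * (if V y < M then A1 + A2 - 2*(1-S)*V y else 0)
       = (A1 + A2) * (\<pi> y * (if V y < M then 1 else 0)) - (2*(1-S)) * (\<pi> y * (if V y < M then V y else 0))" for y
      by (auto simp: algebra_simps)
    have "0 \<le> infsum (\<lambda>y. \<pi> y * (if V y < M then A1 + A2 - 2*(1-S)*V y else 0)) (states n)"
    proof -
      have "0 = infsum (\<lambda>y. \<pi> y * Qf ?g y) (states n)" using T by simp
      also have "\<dots> \<le> infsum (\<lambda>y. \<pi> y * (if V y < M then A1 + A2 - 2*(1-S)*V y else 0)) (states n)"
      proof (rule infsum_mono[OF T(1)])
        show "(\<lambda>y. \<pi> y * (if V y < M then A1 + A2 - 2*(1-S)*V y else 0)) summable_on states n"
          unfolding h using s0 s1 by (intro summable_on_diff_r summable_on_cmult_right)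
        fix y assume y: "y \<in> states n"
        show "\<pi> y * Qf ?g y \<le> \<pi> y * (if V y < M then A1 + A2 - 2*(1-S)*V y else 0)"
          by (rule mult_left_mono[OF Q_sq[OF y M0] stat_nn[OF st]])
      qed
      finally show ?thesis .
    qed
    also have "\<dots> = (A1 + A2) * infsum (\<lambda>y. \<pi> y * (if V y < M then 1 else 0)) (states n)
        - (2*(1-S)) * infsum (\<lambda>y. \<pi> y * (if V y < M then V y else 0)) (states n)"
      unfolding h using s0 s1
      by (simp add: infsum_diff_r summable_on_cmult_right infsum_cmult_right)
    finally have "(2*(1-S)) * infsum (\<lambda>y. \<pi> y * (if V y < M then V y else 0)) (states n)
        \<le> (A1 + A2) * infsum (\<lambda>y. \<pi> y * (if V y < M then 1 else 0)) (states n)" by simp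
    also have "\<dots> \<le> (A1 + A2) * 1"
      using ind_le1[OF st] A1_nn A2_nn by (intro mult_left_mono) auto
    finally show "infsum (\<lambda>y. \<pi> y * (if V y < M then V y else 0)) (states n) \<le> EB1"
      unfolding EB1_def using S1 by (simp add: field_simps)
  qed
  show "(\<lambda>y. \<pi> y * V y) summable_on states n" "infsum (\<lambda>y. \<pi> y * V y) (states n) \<le> EB1"
    using moment_from_trunc[OF st V_nonneg tr] by auto
qed

definition EB2 :: real where "EB2 = (A3 + 3*(A1 + A2)*EB1) / (3 * (1 - S))"

lemma EV2:
  assumes st: "stationary n lam r \<pi>" and S1: "S < 1"
  shows "(\<lambda>y. \<pi> y * (V y)^2) summable_on states n" "infsum (\<lambda>y. \<pi> y * (V y)^2) (states n) \<le> EB2"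
proof -
  note E1 = EV[OF st S1]
  have tr: "(\<lambda>y. \<pi> y * (if V y < M then (V y)^2 else 0)) summable_on states n \<and>
        infsum (\<lambda>y. \<pi> y * (if V y < M then (V y)^2 else 0)) (states n) \<le> EB2" if M0: "0 \<le> M" for M
  proof
    let ?g = "\<lambda>z. (min (V z) M)^3"
    have gb: "\<bar>?g z\<bar> \<le> M^3" for z using min_bounds[OF M0, of z] by (simp add: power_mono)
    have sG: "(\<lambda>y. \<pi> y * M^3) summable_on states n" by (rule summable_on_cmult_left[OF stat_sum[OF st]])
    have b0: "\<And>y. y \<in> states n \<Longrightarrow> \<bar>?g y\<bar> \<le> M^3" using gb by blast
    have bu: "\<And>y v. y \<in> states n \<Longrightarrow> v \<in> {1..n} \<Longrightarrow> \<bar>?g (up v y)\<bar> \<le> M^3" using gb by blast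
    have bd: "\<And>y v. y \<in> states n \<Longrightarrow> v \<in> {1..n} \<Longrightarrow> 1 \<le> y v \<Longrightarrow> \<bar>?g (dn v y)\<bar> \<le> M^3" using gb by blast
    note T = test[OF st sG b0 bu bd]
    have p: "0 \<le> \<pi> y" "0 \<le> V y" for y using stat_nn[OF st] V_nonneg by auto
    show s2: "(\<lambda>y. \<pi> y * (if V y < M then (V y)^2 else 0)) summable_on states n"
    proof (rule bsumm[OF st, of _ "M^2"])
      fix y assume y: "y \<in> states n"
      show "\<bar>\<pi> y * (if V y < M then (V y)^2 else 0)\<bar> \<le> M^2 * \<pi> y"
      proof (cases "V y < M")
        case True
        have "(V y)^2 \<le> M^2" using True p(2)[of y] by (intro power_mono) auto
        then have "\<pi> y * (V y)^2 \<le> \<pi> y * M^2" using p by (intro mult_left_mono) auto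
        then show ?thesis using True p by (simp add: abs_mult mult.commute)
      next
        case False then show ?thesis using p M0 by simp
      qed
    qed
    have s1: "(\<lambda>y. \<pi> y * (if V y < M then V y else 0)) summable_on states n"
    proof (rule bsumm[OF st, of _ M])
      fix y assume y: "y \<in> states n"
      show "\<bar>\<pi> y * (if V y < M then V y else 0)\<bar> \<le> M * \<pi> y"
      proof (cases "V y < M")
        case True
        have "\<pi> y * V y \<le> \<pi> y * M" using True p by (intro mult_left_mono) auto
        then show ?thesis using True p by (simp add: abs_mult mult.commute)
      next
        case False then show ?thesis using p M0 by simp
      qed
    qed
    have s0: "(\<lambda>y. \<pi> y * (if V y < M then 1 else 0)) summable_on states n"
      by (rule bsumm[OF st, of _ 1]) (use stat_nn[OF st] in auto)
    have h: "\<pi> y * (if V y < M then A3 + 3*(A1 + A2) * V y - 3*(1-S)*(V y)^2 else 0)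
       = A3 * (\<pi> y * (if V y < M then 1 else 0)) + (3*(A1 + A2)) * (\<pi> y * (if V y < M then V y else 0))
         - (3*(1-S)) * (\<pi> y * (if V y < M then (V y)^2 else 0))" for y
      by (auto simp: algebra_simps)
    have sh: "(\<lambda>y. A3 * (\<pi> y * (if V y < M then 1 else 0)) + (3*(A1 + A2)) * (\<pi> y * (if V y < M then V y else 0))) summable_on states n"
      using s0 s1 by (intro summable_on_add summable_on_cmult_right)
    have s3: "(\<lambda>y. (3*(1-S)) * (\<pi> y * (if V y < M then (V y)^2 else 0))) summable_on states n"
      using s2 by (intro summable_on_cmult_right)
    have "0 \<le> infsum (\<lambda>y. \<pi> y * (if V y < M then A3 + 3*(A1 + A2) * V y - 3*(1-S)*(V y)^2 else 0)) (states n)"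
    proof -
      have "0 = infsum (\<lambda>y. \<pi> y * Qf ?g y) (states n)" using T by simp
      also have "\<dots> \<le> infsum (\<lambda>y. \<pi> y * (if V y < M then A3 + 3*(A1 + A2) * V y - 3*(1-S)*(V y)^2 else 0)) (states n)"
      proof (rule infsum_mono[OF T(1)])
        show "(\<lambda>y. \<pi> y * (if V y < M then A3 + 3*(A1 + A2) * V y - 3*(1-S)*(V y)^2 else 0)) summable_on states n"
          unfolding h using sh s3 by (rule summable_on_diff_r)
        fix y assume y: "y \<in> states n"
        show "\<pi> y * Qf ?g y \<le> \<pi> y * (if V y < M then A3 + 3*(A1 + A2) * V y - 3*(1-S)*(V y)^2 else 0)"
          by (rule mult_left_mono[OF Q_cu[OF y M0] stat_nn[OF st]])
      qed
      finally show ?thesis .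
    qed
    also have "\<dots> = A3 * infsum (\<lambda>y. \<pi> y * (if V y < M then 1 else 0)) (states n)
        + (3*(A1 + A2)) * infsum (\<lambda>y. \<pi> y * (if V y < M then V y else 0)) (states n)
        - (3*(1-S)) * infsum (\<lambda>y. \<pi> y * (if V y < M then (V y)^2 else 0)) (states n)"
      unfolding h infsum_diff_r[OF sh s3] using s0 s1 s2
      by (simp add: infsum_add summable_on_cmult_right infsum_cmult_right)
    finally have "(3*(1-S)) * infsum (\<lambda>y. \<pi> y * (if V y < M then (V y)^2 else 0)) (states n)
        \<le> A3 * infsum (\<lambda>y. \<pi> y * (if V y < M then 1 else 0)) (states n)
        + (3*(A1 + A2)) * infsum (\<lambda>y. \<pi> y * (if V y < M then V y else 0)) (states n)" by simp
    also have "\<dots> \<le> A3 * 1 + (3*(A1 + A2)) * EB1"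
    proof (intro add_mono mult_left_mono)
      show "infsum (\<lambda>y. \<pi> y * (if V y < M then 1 else 0)) (states n) \<le> 1" by (rule ind_le1[OF st])
      have "infsum (\<lambda>y. \<pi> y * (if V y < M then V y else 0)) (states n) \<le> infsum (\<lambda>y. \<pi> y * V y) (states n)"
        using s1 E1(1) p by (intro infsum_mono) (auto intro: mult_left_mono)
      then show "infsum (\<lambda>y. \<pi> y * (if V y < M then V y else 0)) (states n) \<le> EB1" using E1(2) by simp
    qed (use A1_nn A2_nn A3_nn in auto)
    finally show "infsum (\<lambda>y. \<pi> y * (if V y < M then (V y)^2 else 0)) (states n) \<le> EB2"
      unfolding EB2_def using S1 by (simp add: field_simps)
  qed
  show "(\<lambda>y. \<pi> y * (V y)^2) summable_on states n" "infsum (\<lambda>y. \<pi> y * (V y)^2) (states n) \<le> EB2"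
    using moment_from_trunc[OF st _ tr] by auto
qed

lemma EVsq:
  assumes st: "stationary n lam r \<pi>" and S1: "S < 1"
  shows "(\<lambda>y. \<pi> y * (1 + V y)^2) summable_on states n"
proof -
  have e: "(\<lambda>y. \<pi> y * (1 + V y)^2) = (\<lambda>y. (\<pi> y + 2 * (\<pi> y * V y)) + \<pi> y * (V y)^2)"
    by (auto simp: power2_eq_square algebra_simps)
  show ?thesis unfolding e using stat_sum[OF st] EV(1)[OF st S1] EV2(1)[OF st S1]
    by (intro summable_on_add summable_on_cmult_right)
qed

end


context beams begin

definition av :: "nat \<Rightarrow> nat \<Rightarrow> real" where "av v u = (if v \<le> u then a1 u else 0)"
definition Vw :: "nat \<Rightarrow> state \<Rightarrow> real" where "Vw v = L (av v) n"
definition ind :: "nat \<Rightarrow> nat \<Rightarrow> real" where "ind w u = (if u = w then 1 else 0)"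

lemma L_ind: "w \<in> {1..n} \<Longrightarrow> L (ind w) n y = real (y w)"
  unfolding L_def ind_def by (simp add: if_distrib[of "\<lambda>c. c * _"] sum.delta cong: if_cong)

lemma V_up: "u \<in> {1..n} \<Longrightarrow> V (up u y) = V y + a1 u" unfolding V_def by (rule L_up)
lemma V_dn: "u \<in> {1..n} \<Longrightarrow> 1 \<le> y u \<Longrightarrow> V (dn u y) = V y - a1 u" unfolding V_def by (rule L_dn)

lemma Vw_nn: "0 \<le> Vw v y"
  unfolding Vw_def L_def av_def using a1_pos by (intro sum_nonneg) (auto simp: less_imp_le)
lemma Vw_le: "Vw v y \<le> V y"
  unfolding Vw_def V_def L_def av_def using a1_pos by (intro sum_mono) (auto simp: less_imp_le)

lemma yw_le: "w \<in> {1..n} \<Longrightarrow> real (y w) \<le> r w * V y"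
proof -
  assume w: "w \<in> {1..n}"
  have "a1 w * real (y w) \<le> V y" unfolding V_def L_def
    using w a1_pos by (intro member_le_sum[where f="\<lambda>u. a1 u * real (y u)"]) (auto simp: less_imp_le)
  then have "r w * (a1 w * real (y w)) \<le> r w * V y" using r_nn[OF w] by (rule mult_left_mono)
  then show ?thesis using r_a1[OF w] by (simp add: mult.assoc[symmetric])
qed

lemma QX:
  assumes y: "y \<in> states n" and w: "w \<in> {1..n}"
  shows "Qf (\<lambda>z. real (z w)) y = lam w - (if y \<noteq> (\<lambda>_. 0) \<and> topb n y = w then r w else 0)"
proof -
  have e: "(\<lambda>z. real (z w)) = (\<lambda>z. id (L (ind w) n z))" using L_ind[OF w] by auto
  have "Qf (\<lambda>z. id (L (ind w) n z)) y = (\<Sum>v\<in>{1..n}. lam v * (id (L (ind w) n y + ind w v) - id (L (ind w) n y)))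
     + (if y = (\<lambda>_. 0) then 0 else r (topb n y) * (id (L (ind w) n y - ind w (topb n y)) - id (L (ind w) n y)))"
    by (rule Qf_L[OF y])
  also have "\<dots> = lam w - (if y \<noteq> (\<lambda>_. 0) \<and> topb n y = w then r w else 0)"
    using w by (simp add: ind_def if_distrib[of "\<lambda>c. _ * c"] sum.delta cong: if_cong)
  finally show ?thesis unfolding e .
qed

lemma PX:
  assumes st: "stationary n lam r \<pi>" and S1: "S < 1" and w: "w \<in> {1..n}"
  shows "(\<lambda>y. \<pi> y * (if y \<noteq> (\<lambda>_. 0) \<and> topb n y = w then 1 else 0)) summable_on states n"
    "infsum (\<lambda>y. \<pi> y * (if y \<noteq> (\<lambda>_. 0) \<and> topb n y = w then 1 else 0)) (states n) = lam w / r w"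
proof -
  let ?g = "\<lambda>z. real (z w)"
  let ?G = "\<lambda>y. (r w + 1) * (1 + V y)^2"
  have sG: "(\<lambda>y. \<pi> y * ?G y) summable_on states n"
    using summable_on_cmult_right[OF EVsq[OF st S1], of "r w + 1"] by (simp add: algebra_simps)
  have key: "r w * V y + 1 \<le> ?G y" for y
  proof -
    have V0: "0 \<le> V y" by (rule V_nonneg)
    have "r w * V y + 1 \<le> (r w + 1) * (1 + V y)" using r_nn[OF w] V0 by (simp add: algebra_simps)
    also have "\<dots> \<le> (r w + 1) * (1 + V y)^2"
      using r_nn[OF w] V0 by (intro mult_left_mono) (auto simp: power2_eq_square)
    finally show ?thesis .
  qed
  have b0: "\<And>y. y \<in> states n \<Longrightarrow> \<bar>?g y\<bar> \<le> ?G y" using yw_le[OF w] key by (smt (verit) of_nat_0_le_iff abs_of_nonneg)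
  have bu: "\<And>y v. y \<in> states n \<Longrightarrow> v \<in> {1..n} \<Longrightarrow> \<bar>?g (up v y)\<bar> \<le> ?G y"
  proof -
    fix y v
    have "real (up v y w) \<le> real (y w) + 1" by (simp add: up_def)
    then show "\<bar>?g (up v y)\<bar> \<le> ?G y" using yw_le[OF w, of y] key[of y] by simp
  qed
  have bd: "\<And>y v. y \<in> states n \<Longrightarrow> v \<in> {1..n} \<Longrightarrow> 1 \<le> y v \<Longrightarrow> \<bar>?g (dn v y)\<bar> \<le> ?G y"
  proof -
    fix y v
    have "real (dn v y w) \<le> real (y w)" by (simp add: dn_def)
    then show "\<bar>?g (dn v y)\<bar> \<le> ?G y" using yw_le[OF w, of y] key[of y] by simp
  qed
  note T = test[OF st sG b0 bu bd]
  have s0: "(\<lambda>y. \<pi> y * (if y \<noteq> (\<lambda>_. 0) \<and> topb n y = w then 1 else 0)) summable_on states n"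
    by (rule bsumm[OF st, of _ 1]) (use stat_nn[OF st] in auto)
  then show "(\<lambda>y. \<pi> y * (if y \<noteq> (\<lambda>_. 0) \<and> topb n y = w then 1 else 0)) summable_on states n" .
  have "0 = infsum (\<lambda>y. \<pi> y * Qf ?g y) (states n)" using T by simp
  also have "\<dots> = infsum (\<lambda>y. lam w * \<pi> y - r w * (\<pi> y * (if y \<noteq> (\<lambda>_. 0) \<and> topb n y = w then 1 else 0))) (states n)"
    by (intro infsum_cong) (auto simp: QX[OF _ w] algebra_simps)
  also have "\<dots> = lam w * 1 - r w * infsum (\<lambda>y. \<pi> y * (if y \<noteq> (\<lambda>_. 0) \<and> topb n y = w then 1 else 0)) (states n)"
    using stat_sum[OF st] s0 stat_one[OF st]
    by (simp add: infsum_diff_r summable_on_cmult_right infsum_cmult_right)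
  finally show "infsum (\<lambda>y. \<pi> y * (if y \<noteq> (\<lambda>_. 0) \<and> topb n y = w then 1 else 0)) (states n) = lam w / r w"
    using r_pos[OF w] by (simp add: field_simps)
qed

definition Sv :: "nat \<Rightarrow> real" where "Sv v = (\<Sum>u\<in>{1..n}. lam u * av v u)"
definition A2v :: "nat \<Rightarrow> real" where "A2v v = (\<Sum>u\<in>{1..n}. lam u * av v u ^ 2)"

lemma sum_av: "v \<in> {1..n} \<Longrightarrow> (\<Sum>u\<in>{1..n}. f u * av v u) = (\<Sum>u\<in>{v..n}. f u * a1 u)"
proof -
  assume v: "v \<in> {1..n}"
  have "(\<Sum>u\<in>{1..n}. f u * av v u) = (\<Sum>u\<in>{1..n}. if u \<in> {v..n} then f u * a1 u else 0)"
    by (intro sum.cong) (auto simp: av_def)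
  also have "\<dots> = (\<Sum>u\<in>{1..n} \<inter> {v..n}. f u * a1 u)" by (rule sum.inter_restrict[symmetric]) simp
  also have "{1..n} \<inter> {v..n} = {v..n}" using v by auto
  finally show ?thesis .
qed

lemma sum_av2: "v \<in> {1..n} \<Longrightarrow> (\<Sum>u\<in>{1..n}. f u * av v u ^ 2) = (\<Sum>u\<in>{v..n}. f u * a1 u ^ 2)"
proof -
  assume v: "v \<in> {1..n}"
  have "(\<Sum>u\<in>{1..n}. f u * av v u ^ 2) = (\<Sum>u\<in>{1..n}. if u \<in> {v..n} then f u * a1 u ^ 2 else 0)"
    by (intro sum.cong) (auto simp: av_def)
  also have "\<dots> = (\<Sum>u\<in>{1..n} \<inter> {v..n}. f u * a1 u ^ 2)" by (rule sum.inter_restrict[symmetric]) simp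
  also have "{1..n} \<inter> {v..n} = {v..n}" using v by auto
  finally show ?thesis .
qed

lemma Vw_zero:
  assumes y: "y \<in> states n" and c: "\<not> (y \<noteq> (\<lambda>_. 0) \<and> v \<le> topb n y)"
  shows "Vw v y = 0"
  unfolding Vw_def L_def
proof (intro sum.neutral ballI)
  fix u assume u: "u \<in> {1..n}"
  show "av v u * real (y u) = 0"
  proof (cases "v \<le> u")
    case True
    show ?thesis
    proof (cases "y = (\<lambda>_. 0)")
      case False
      then have "u \<in> {topb n y<..n}" using c True u by auto
      then have "y u = 0" using top_props(3)[OF y False] by blast
      then show ?thesis by simp
    qed simp
  qed (simp add: av_def)
qed

lemma QVw:
  assumes y: "y \<in> states n" and v: "v \<in> {1..n}"
  shows "Qf (\<lambda>z. (Vw v z)^2) y = 2 * Vw v y * (Sv v - 1) + A2v v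
      + (if y \<noteq> (\<lambda>_. 0) \<and> v \<le> topb n y then a1 (topb n y) else 0)"
proof -
  define t where "t = topb n y"
  have Q: "Qf (\<lambda>z. (Vw v z)^2) y = (\<Sum>u\<in>{1..n}. lam u * ((Vw v y + av v u)^2 - (Vw v y)^2))
     + (if y = (\<lambda>_. 0) then 0 else r t * ((Vw v y - av v t)^2 - (Vw v y)^2))"
    unfolding Vw_def t_def by (rule Qf_L[OF y])
  have arr: "(\<Sum>u\<in>{1..n}. lam u * ((Vw v y + av v u)^2 - (Vw v y)^2)) = 2 * Vw v y * Sv v + A2v v"
    unfolding Sv_def A2v_def by (simp add: power2_eq_square sum_distrib_left sum.distrib algebra_simps)
  have dep: "(if y = (\<lambda>_. 0) then 0 else r t * ((Vw v y - av v t)^2 - (Vw v y)^2))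
      = (if y \<noteq> (\<lambda>_. 0) \<and> v \<le> t then a1 t else 0) - 2 * Vw v y"
  proof (cases "y \<noteq> (\<lambda>_. 0) \<and> v \<le> t")
    case True
    then have t: "t \<in> {1..n}" using top_props[OF y] t_def by auto
    have "r t * ((Vw v y - av v t)^2 - (Vw v y)^2) = (r t * a1 t) * (a1 t - 2 * Vw v y)"
      using True by (simp add: av_def power2_eq_square algebra_simps)
    then show ?thesis using True r_a1[OF t] by simp
  next
    case False
    have z: "Vw v y = 0" using Vw_zero[OF y] False t_def by blast
    show ?thesis
    proof (cases "y = (\<lambda>_. 0)")
      case False
      then have "\<not> v \<le> t" using \<open>\<not> (y \<noteq> (\<lambda>_. 0) \<and> v \<le> t)\<close> by blast
      then show ?thesis using False z by (simp add: av_def)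
    qed (use z in simp)
  qed
  have "Qf (\<lambda>z. (Vw v z)^2) y = (2 * Vw v y * Sv v + A2v v) + ((if y \<noteq> (\<lambda>_. 0) \<and> v \<le> t then a1 t else 0) - 2 * Vw v y)"
    using Q arr dep by simp
  then show ?thesis unfolding t_def by (simp add: algebra_simps)
qed

lemma Xsumm:
  assumes st: "stationary n lam r \<pi>" and S1: "S < 1" and u: "u \<in> {1..n}"
  shows "(\<lambda>y. real (y u) * \<pi> y) summable_on states n"
proof (rule summable_bound)
  show "(\<lambda>y. r u * (\<pi> y * V y)) summable_on states n" using EV(1)[OF st S1] by (rule summable_on_cmult_right)
  fix y assume "y \<in> states n"
  have "real (y u) * \<pi> y \<le> (r u * V y) * \<pi> y" using yw_le[OF u] stat_nn[OF st] by (intro mult_right_mono) auto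
  then show "\<bar>real (y u) * \<pi> y\<bar> \<le> r u * (\<pi> y * V y)" using stat_nn[OF st, of y] by (simp add: algebra_simps)
qed

lemma EVw:
  assumes st: "stationary n lam r \<pi>" and S1: "S < 1" and v: "v \<in> {1..n}"
  shows "infsum (\<lambda>y. \<pi> y * Vw v y) (states n) = (\<Sum>u\<in>{v..n}. a1 u * mean_N n \<pi> u)"
proof -
  have e: "\<pi> y * Vw v y = (\<Sum>u\<in>{v..n}. a1 u * (real (y u) * \<pi> y))" for y
  proof -
    have "Vw v y = (\<Sum>u\<in>{v..n}. real (y u) * a1 u)" unfolding Vw_def L_def
      using sum_av[OF v, of "\<lambda>u. real (y u)"] by (simp add: mult.commute)
    then show ?thesis by (simp add: sum_distrib_left algebra_simps)
  qed
  have s: "\<And>u. u \<in> {v..n} \<Longrightarrow> (\<lambda>y. a1 u * (real (y u) * \<pi> y)) summable_on states n"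
    using v by (intro summable_on_cmult_right Xsumm[OF st S1]) auto
  have "infsum (\<lambda>y. \<Sum>u\<in>{v..n}. a1 u * (real (y u) * \<pi> y)) (states n) = (\<Sum>u\<in>{v..n}. infsum (\<lambda>y. a1 u * (real (y u) * \<pi> y)) (states n))"
    using infsum_sum_fin[of "{v..n}" "\<lambda>u y. a1 u * (real (y u) * \<pi> y)", OF _ s] by simp
  also have "\<dots> = (\<Sum>u\<in>{v..n}. a1 u * mean_N n \<pi> u)"
    unfolding mean_N_def using v by (intro sum.cong refl infsum_cmult_right Xsumm[OF st S1]) auto
  finally show ?thesis unfolding e .
qed

lemma PV:
  assumes st: "stationary n lam r \<pi>" and S1: "S < 1" and v: "v \<in> {1..n}"
  shows "infsum (\<lambda>y. \<pi> y * Vw v y) (states n) * (1 - Sv v) = (\<Sum>w\<in>{v..n}. lam w * a1 w ^ 2)"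
proof -
  let ?g = "\<lambda>z. (Vw v z)^2"
  let ?G = "\<lambda>y. (1 + A1)^2 * (1 + V y)^2"
  have sG: "(\<lambda>y. \<pi> y * ?G y) summable_on states n"
    using summable_on_cmult_right[OF EVsq[OF st S1], of "(1 + A1)^2"] by (simp add: algebra_simps)
  have key: "0 \<le> Vw v z \<Longrightarrow> Vw v z \<le> V y + A1 \<Longrightarrow> \<bar>?g z\<bar> \<le> ?G y" for z y
  proof -
    assume h: "0 \<le> Vw v z" "Vw v z \<le> V y + A1"
    have e: "(1 + A1) * (1 + V y) = 1 + V y + A1 + A1 * V y" by (simp add: algebra_simps)
    have "0 \<le> A1 * V y" using A1_nn V_nonneg[of y] by simp
    then have "Vw v z \<le> (1 + A1) * (1 + V y)" using h unfolding e by linarith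
    then have "(Vw v z)^2 \<le> ((1 + A1) * (1 + V y))^2" using h by (intro power_mono) auto
    then show ?thesis by (simp add: power_mult_distrib)
  qed
  have b0: "\<And>y. y \<in> states n \<Longrightarrow> \<bar>?g y\<bar> \<le> ?G y"
  proof -
    fix y
    have "Vw v y \<le> V y + A1" using Vw_le[of v y] A1_nn by linarith
    then show "\<bar>?g y\<bar> \<le> ?G y" by (rule key[OF Vw_nn])
  qed
  have bu: "\<And>y u. y \<in> states n \<Longrightarrow> u \<in> {1..n} \<Longrightarrow> \<bar>?g (up u y)\<bar> \<le> ?G y"
  proof -
    fix y u assume "y \<in> states n" "u \<in> {1..n}"
    then have "Vw v (up u y) \<le> V y + A1" using Vw_le[of v "up u y"] V_up[of u y] a1_le[of u] by linarith
    then show "\<bar>?g (up u y)\<bar> \<le> ?G y" by (rule key[OF Vw_nn])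
  qed
  have bd: "\<And>y u. y \<in> states n \<Longrightarrow> u \<in> {1..n} \<Longrightarrow> 1 \<le> y u \<Longrightarrow> \<bar>?g (dn u y)\<bar> \<le> ?G y"
  proof -
    fix y u assume "y \<in> states n" "u \<in> {1..n}" "1 \<le> y u"
    then have "Vw v (dn u y) \<le> V y + A1" using Vw_le[of v "dn u y"] V_dn[of u y] a1_pos[of u] A1_nn by linarith
    then show "\<bar>?g (dn u y)\<bar> \<le> ?G y" by (rule key[OF Vw_nn])
  qed
  note T = test[OF st sG b0 bu bd]
  define f3 where "f3 = (\<lambda>w y. \<pi> y * (if y \<noteq> (\<lambda>_. 0) \<and> topb n y = w then 1 else (0::real)))"
  have s1: "(\<lambda>y. \<pi> y * Vw v y) summable_on states n"
  proof (rule summable_bound[OF EV(1)[OF st S1]])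
    fix y show "\<bar>\<pi> y * Vw v y\<bar> \<le> \<pi> y * V y"
      using Vw_nn Vw_le stat_nn[OF st] by (simp add: abs_mult mult_left_mono)
  qed
  have s3: "\<And>w. w \<in> {v..n} \<Longrightarrow> (\<lambda>y. a1 w * f3 w y) summable_on states n"
    unfolding f3_def using v by (intro summable_on_cmult_right PX(1)[OF st S1]) auto
  have s3': "(\<lambda>y. \<Sum>w\<in>{v..n}. a1 w * f3 w y) summable_on states n \<and>
     infsum (\<lambda>y. \<Sum>w\<in>{v..n}. a1 w * f3 w y) (states n) = (\<Sum>w\<in>{v..n}. infsum (\<lambda>y. a1 w * f3 w y) (states n))"
    by (rule infsum_sum_fin) (use s3 in auto)
  have pt: "\<pi> y * Qf ?g y = 2 * (Sv v - 1) * (\<pi> y * Vw v y) + A2v v * \<pi> y + (\<Sum>w\<in>{v..n}. a1 w * f3 w y)"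
    if y: "y \<in> states n" for y
  proof -
    have "(if y \<noteq> (\<lambda>_. 0) \<and> v \<le> topb n y then a1 (topb n y) else 0) = (\<Sum>w\<in>{v..n}. a1 w * (if y \<noteq> (\<lambda>_. 0) \<and> topb n y = w then 1 else 0))"
    proof (cases "y = (\<lambda>_. 0)")
      case False
      have "topb n y \<le> n" using top_props(1)[OF y False] by auto
      then show ?thesis using False by (simp add: if_distrib[of "\<lambda>c. a1 _ * c"] sum.delta' cong: if_cong)
    qed simp
    then show ?thesis unfolding QVw[OF y v] f3_def by (simp add: sum_distrib_left algebra_simps)
  qed
  have "0 = infsum (\<lambda>y. \<pi> y * Qf ?g y) (states n)" using T by simp
  also have "\<dots> = infsum (\<lambda>y. 2 * (Sv v - 1) * (\<pi> y * Vw v y) + A2v v * \<pi> y + (\<Sum>w\<in>{v..n}. a1 w * f3 w y)) (states n)"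
    by (intro infsum_cong pt)
  also have "\<dots> = 2 * (Sv v - 1) * infsum (\<lambda>y. \<pi> y * Vw v y) (states n) + A2v v * 1 + (\<Sum>w\<in>{v..n}. infsum (\<lambda>y. a1 w * f3 w y) (states n))"
  proof -
    have a: "(\<lambda>y. 2 * (Sv v - 1) * (\<pi> y * Vw v y)) summable_on states n" using s1 by (rule summable_on_cmult_right)
    have b: "(\<lambda>y. A2v v * \<pi> y) summable_on states n" using stat_sum[OF st] by (rule summable_on_cmult_right)
    have ab: "(\<lambda>y. 2 * (Sv v - 1) * (\<pi> y * Vw v y) + A2v v * \<pi> y) summable_on states n" using a b by (rule summable_on_add)
    show ?thesis
      unfolding infsum_add[OF ab s3'[THEN conjunct1]] infsum_add[OF a b] s3'[THEN conjunct2]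
      using s1 stat_sum[OF st] stat_one[OF st] by (simp add: infsum_cmult_right)
  qed
  also have "(\<Sum>w\<in>{v..n}. infsum (\<lambda>y. a1 w * f3 w y) (states n)) = (\<Sum>w\<in>{v..n}. lam w * a1 w ^ 2)"
  proof (intro sum.cong refl)
    fix w assume w: "w \<in> {v..n}"
    then have w': "w \<in> {1..n}" using v by auto
    have "infsum (\<lambda>y. a1 w * f3 w y) (states n) = a1 w * (lam w / r w)"
      unfolding f3_def using PX[OF st S1 w'] by (simp add: infsum_cmult_right)
    then show "infsum (\<lambda>y. a1 w * f3 w y) (states n) = lam w * a1 w ^ 2"
      by (simp add: a1_def power2_eq_square)
  qed
  also have "A2v v = (\<Sum>w\<in>{v..n}. lam w * a1 w ^ 2)" unfolding A2v_def by (rule sum_av2[OF v])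
  finally show ?thesis by (simp add: algebra_simps)
qed

end


lemma alg1:
  fixes x b s R :: real
  assumes R: "R > 0" and d1: "1 - x - s > 0" and d2: "1 - s > 0"
  shows "R * ((x / R + b) / (1 - (x + s)) - b / (1 - s)) = x * (1 + (R * (x / R + b) - (x + s))) / ((1 - (x + s)) * (1 - s))"
proof -
  define D1 where "D1 = 1 - (x + s)"
  define D2 where "D2 = 1 - s"
  have e1: "D1 \<noteq> 0" "D2 \<noteq> 0" "R \<noteq> 0" using assms unfolding D1_def D2_def by auto
  have "R * ((x / R + b) / D1 - b / D2) = (x + R * b) / D1 - R * b / D2"
    using e1 by (simp add: field_simps)
  also have "\<dots> = ((x + R * b) * D2 - R * b * D1) / (D1 * D2)"
    using e1 by (simp add: diff_frac_eq)
  also have "(x + R * b) * D2 - R * b * D1 = x * (1 + (R * (x / R + b) - (x + s)))"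
    unfolding D1_def D2_def using e1 by (simp add: algebra_simps)
  finally show ?thesis unfolding D1_def D2_def .
qed

context beams begin

definition Ss :: "nat \<Rightarrow> real" where "Ss v = (\<Sum>w\<in>{v..n}. lam w / r w)"
definition Bs :: "nat \<Rightarrow> real" where "Bs v = (\<Sum>w\<in>{v..n}. lam w / r w / r w)"

lemma rho_nn: "0 \<le> lam w / r w" if "w \<in> {1..n}" using lam_nn[OF that] r_nn[OF that] by simp

lemma S_eq: "S = Ss 1" unfolding S_def Ss_def a1_def by simp

lemma Ss_le: "1 \<le> v \<Longrightarrow> Ss v \<le> Ss 1"
  unfolding Ss_def using rho_nn by (intro sum_mono2) auto
lemma Ss_nn: "1 \<le> v \<Longrightarrow> 0 \<le> Ss v"
  unfolding Ss_def using rho_nn by (intro sum_nonneg) auto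
lemma Bs_nn: "1 \<le> v \<Longrightarrow> 0 \<le> Bs v"
  unfolding Bs_def
proof (intro sum_nonneg)
  fix w assume "1 \<le> v" "w \<in> {v..n}"
  then have w: "w \<in> {1..n}" by auto
  show "0 \<le> lam w / r w / r w" by (rule divide_nonneg_nonneg[OF rho_nn[OF w] r_nn[OF w]])
qed

lemma E_formula:
  assumes st: "stationary n lam r \<pi>" and S1: "S < 1" and v: "v \<in> {1..Suc n}"
  shows "(\<Sum>u\<in>{v..n}. a1 u * mean_N n \<pi> u) = Bs v / (1 - Ss v)"
proof (cases "v \<le> n")
  case True
  then have v': "v \<in> {1..n}" using v by auto
  have Sv: "Sv v = Ss v" unfolding Sv_def Ss_def using sum_av[OF v', of lam] by (simp add: a1_def)
  have B: "(\<Sum>w\<in>{v..n}. lam w * a1 w ^ 2) = Bs v" unfolding Bs_def a1_def by (simp add: power2_eq_square)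
  have "Ss v < 1" using Ss_le[of v] v S1 S_eq by auto
  then show ?thesis using PV[OF st S1 v'] EVw[OF st S1 v'] Sv B by (simp add: field_simps)
next
  case False
  then have "v = Suc n" using v by auto
  then show ?thesis by (simp add: Bs_def Ss_def)
qed

lemma mean_formula:
  assumes st: "stationary n lam r \<pi>" and S1: "S < 1" and v: "v \<in> {1..n}"
  shows "mean_N n \<pi> v = lam v / r v * (1 + (\<Sum>v'\<in>{v..n}. lam v' / r v' * (r v / r v' - 1)))
              / ((1 - (\<Sum>v'\<in>{v..n}. lam v' / r v')) * (1 - (\<Sum>v'\<in>{v<..n}. lam v' / r v')))"
    "lam v / mean_N n \<pi> v = r v * (1 - (\<Sum>v'\<in>{v..n}. lam v' / r v')) * (1 - (\<Sum>v'\<in>{v<..n}. lam v' / r v'))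
              / (1 + (\<Sum>v'\<in>{v..n}. lam v' / r v' * (r v / r v' - 1)))"
proof -
  have vn: "v \<le> n" "1 \<le> v" using v by auto
  have gt: "{v<..n} = {Suc v..n}" by auto
  have splitS: "Ss v = lam v / r v + Ss (Suc v)" unfolding Ss_def using vn by (simp add: sum.atLeast_Suc_atMost)
  have splitB: "Bs v = lam v / r v / r v + Bs (Suc v)" unfolding Bs_def using vn by (simp add: sum.atLeast_Suc_atMost)
  have splitE: "(\<Sum>u\<in>{v..n}. a1 u * mean_N n \<pi> u) = a1 v * mean_N n \<pi> v + (\<Sum>u\<in>{Suc v..n}. a1 u * mean_N n \<pi> u)"
    using vn by (simp add: sum.atLeast_Suc_atMost)
  have E1: "(\<Sum>u\<in>{v..n}. a1 u * mean_N n \<pi> u) = Bs v / (1 - Ss v)" using E_formula[OF st S1] v by auto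
  have E2: "(\<Sum>u\<in>{Suc v..n}. a1 u * mean_N n \<pi> u) = Bs (Suc v) / (1 - Ss (Suc v))" using E_formula[OF st S1] v by auto
  have R: "r v > 0" using r_pos[OF v] .
  have m: "mean_N n \<pi> v = r v * (Bs v / (1 - Ss v) - Bs (Suc v) / (1 - Ss (Suc v)))"
    using E1 E2 splitE R unfolding a1_def by (simp add: field_simps)
  have sum1: "(\<Sum>v'\<in>{v..n}. lam v' / r v' * (r v / r v' - 1)) = r v * Bs v - Ss v"
    unfolding Bs_def Ss_def by (simp add: sum_distrib_left sum_subtractf algebra_simps)
  have sum2: "(\<Sum>v'\<in>{v..n}. lam v' / r v') = Ss v" "(\<Sum>v'\<in>{v<..n}. lam v' / r v') = Ss (Suc v)"
    unfolding Ss_def gt by auto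
  have d1: "1 - Ss v > 0" using Ss_le[of v] vn S1 S_eq by auto
  have d2: "1 - Ss (Suc v) > 0" using Ss_le[of "Suc v"] vn S1 S_eq by auto
  have F: "mean_N n \<pi> v = lam v / r v * (1 + (r v * Bs v - Ss v)) / ((1 - Ss v) * (1 - Ss (Suc v)))"
    unfolding m splitS splitB using alg1[OF R, of "lam v / r v" "Ss (Suc v)" "Bs (Suc v)"] d1 d2 splitS
    by (simp add: add_divide_distrib)
  show "mean_N n \<pi> v = lam v / r v * (1 + (\<Sum>v'\<in>{v..n}. lam v' / r v' * (r v / r v' - 1)))
              / ((1 - (\<Sum>v'\<in>{v..n}. lam v' / r v')) * (1 - (\<Sum>v'\<in>{v<..n}. lam v' / r v')))"
    unfolding sum1 sum2 by (rule F)
  have X: "1 + (r v * Bs v - Ss v) > 0"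
  proof -
    have "r v * Bs v - Ss v = r v * Bs (Suc v) - Ss (Suc v)"
      unfolding splitS splitB using R by (simp add: field_simps)
    moreover have "0 \<le> r v * Bs (Suc v)" using R Bs_nn[of "Suc v"] by simp
    ultimately show ?thesis using d2 by linarith
  qed
  have lp: "lam v > 0" using lam_pos[OF v] .
  show "lam v / mean_N n \<pi> v = r v * (1 - (\<Sum>v'\<in>{v..n}. lam v' / r v')) * (1 - (\<Sum>v'\<in>{v<..n}. lam v' / r v'))
              / (1 + (\<Sum>v'\<in>{v..n}. lam v' / r v' * (r v / r v' - 1)))"
  proof -
    define X' where "X' = 1 + (r v * Bs v - Ss v)"
    define D where "D = (1 - Ss v) * (1 - Ss (Suc v))"
    have D: "D > 0" unfolding D_def using d1 d2 by simp
    have Xp: "X' > 0" using X unfolding X'_def .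
    have "lam v / mean_N n \<pi> v = lam v / (lam v / r v * X' / D)" unfolding F X'_def D_def ..
    also have "\<dots> = r v * D / X'" using D Xp lp R by (simp add: field_simps)
    finally show ?thesis unfolding sum1 sum2 X'_def D_def by (simp add: mult.assoc)
  qed
qed

end


definition tot :: "nat \<Rightarrow> state \<Rightarrow> nat" where "tot n a = (\<Sum>v\<in>{1..n}. a v)"

lemma tot_dn: "v \<in> {1..n} \<Longrightarrow> 1 \<le> a v \<Longrightarrow> Suc (tot n (dn v a)) = tot n a"
proof -
  assume v: "v \<in> {1..n}" and a: "1 \<le> a v"
  have "tot n a = a v + (\<Sum>u\<in>{1..n} - {v}. a u)" unfolding tot_def using v by (simp add: sum.remove)
  moreover have "tot n (dn v a) = (a v - 1) + (\<Sum>u\<in>{1..n} - {v}. a u)"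
    unfolding tot_def using v by (simp add: sum.remove dn_def)
  ultimately show ?thesis using a by simp
qed

lemma tot_zero: "a \<in> states n \<Longrightarrow> tot n a = 0 \<Longrightarrow> a = (\<lambda>_. 0)"
  unfolding tot_def using states_zero by auto

context beams begin

definition Rel :: "(state \<times> state) set" where
  "Rel = {(a, b). a \<in> states n \<and> b \<in> states n \<and> a \<noteq> b \<and> rate n lam r a b > 0}"

lemma rate_ge_term:
  assumes "v \<in> {1..n}"
  shows "(if y = up v x then lam v else 0) + (if 1 \<le> x v \<and> y = dn v x then r v * gamma n v x else 0) \<le> rate n lam r x y"
  unfolding rate_alt using assms lam_nn rg_nn
  by (intro member_le_sum[where f="\<lambda>v. (if y = up v x then lam v else 0) + (if 1 \<le> x v \<and> y = dn v x then r v * gamma n v x else 0)"])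
     (auto intro!: add_nonneg_nonneg)

lemma rate_up_pos: "v \<in> {1..n} \<Longrightarrow> 0 < rate n lam r x (up v x)"
proof -
  assume v: "v \<in> {1..n}"
  have "lam v \<le> rate n lam r x (up v x)"
    using rate_ge_term[OF v, of "up v x" x] rg_nn[OF v, of x] by (auto split: if_splits)
  then show ?thesis using lam_pos[OF v] by simp
qed

lemma rate_top_pos:
  assumes x: "x \<in> states n" "x \<noteq> (\<lambda>_. 0)"
  shows "0 < rate n lam r x (dn (topb n x) x)"
proof -
  let ?t = "topb n x"
  have t: "?t \<in> {1..n}" "1 \<le> x ?t" using top_props[OF x] by auto
  have g: "gamma n ?t x = 1" using served_iff[OF x(1) t(1)] x(2) t(2) by auto
  have ne: "dn ?t x \<noteq> up ?t x" by (simp add: dn_def up_def fun_eq_iff)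
  have "r ?t * gamma n ?t x \<le> rate n lam r x (dn ?t x)"
    using rate_ge_term[OF t(1), of "dn ?t x" x] t ne by auto
  then show ?thesis using g r_pos[OF t(1)] by simp
qed

lemma to_zero: "\<forall>a. a \<in> states n \<longrightarrow> tot n a = k \<longrightarrow> (a, (\<lambda>_. 0)) \<in> Rel\<^sup>*"
proof (induction k)
  case 0 then show ?case using tot_zero by auto
next
  case (Suc k)
  show ?case
  proof (intro allI impI)
    fix a assume a: "a \<in> states n" "tot n a = Suc k"
    then have nz: "a \<noteq> (\<lambda>_. 0)" by (auto simp: tot_def)
    let ?t = "topb n a"
    have t: "?t \<in> {1..n}" "1 \<le> a ?t" using top_props[OF a(1) nz] by auto
    have "tot n (dn ?t a) = k" using tot_dn[of ?t n a, OF t] a by simp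
    then have "(dn ?t a, (\<lambda>_. 0)) \<in> Rel\<^sup>*" using Suc dn_in_states[OF a(1)] by blast
    moreover have "(a, dn ?t a) \<in> Rel" unfolding Rel_def
      using a(1) dn_in_states[OF a(1)] dn_neq[of a ?t, OF t(2)] rate_top_pos[OF a(1) nz] by auto
    ultimately show "(a, (\<lambda>_. 0)) \<in> Rel\<^sup>*" by (meson converse_rtrancl_into_rtrancl)
  qed
qed

lemma from_zero: "\<forall>b. b \<in> states n \<longrightarrow> tot n b = k \<longrightarrow> ((\<lambda>_. 0), b) \<in> Rel\<^sup>*"
proof (induction k)
  case 0 then show ?case using tot_zero by auto
next
  case (Suc k)
  show ?case
  proof (intro allI impI)
    fix b assume b: "b \<in> states n" "tot n b = Suc k"
    then have nz: "b \<noteq> (\<lambda>_. 0)" by (auto simp: tot_def)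
    let ?t = "topb n b"
    have t: "?t \<in> {1..n}" "1 \<le> b ?t" using top_props[OF b(1) nz] by auto
    have "tot n (dn ?t b) = k" using tot_dn[of ?t n b, OF t] b by simp
    then have "((\<lambda>_. 0), dn ?t b) \<in> Rel\<^sup>*" using Suc dn_in_states[OF b(1)] by blast
    moreover have "(dn ?t b, b) \<in> Rel" unfolding Rel_def
      using b(1) dn_in_states[OF b(1)] dn_neq[of b ?t, OF t(2)] rate_up_pos[OF t(1), of "dn ?t b"] up_dn[of b ?t, OF t(2)] by auto
    ultimately show "((\<lambda>_. 0), b) \<in> Rel\<^sup>*" by (meson rtrancl_into_rtrancl)
  qed
qed

lemma irred: "irreducible n lam r"
proof -
  have "(x, y) \<in> Rel\<^sup>*" if "x \<in> states n" "y \<in> states n" for x y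
  proof -
    have "(x, (\<lambda>_. 0)) \<in> Rel\<^sup>*" using to_zero[of "tot n x"] that by blast
    moreover have "((\<lambda>_. 0), y) \<in> Rel\<^sup>*" using from_zero[of "tot n y"] that by blast
    ultimately show ?thesis by (rule rtrancl_trans)
  qed
  then show ?thesis unfolding irreducible_def Rel_def by blast
qed

end


context beams begin

lemma J_lin: "J (\<lambda>z. a * f z + b * g z) y = a * J f y + b * J g y"
proof -
  have "\<And>v. lam v * (a * f (up v y) + b * g (up v y)) + (if 1 \<le> y v then r v * gamma n v y * (a * f (dn v y) + b * g (dn v y)) else 0)
     = a * (lam v * f (up v y) + (if 1 \<le> y v then r v * gamma n v y * f (dn v y) else 0))
     + b * (lam v * g (up v y) + (if 1 \<le> y v then r v * gamma n v y * g (dn v y) else 0))"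
    by (auto simp: algebra_simps)
  then show ?thesis unfolding J_def by (simp only: sum.distrib sum_distrib_left[symmetric])
qed
lemma J_const: "J (\<lambda>z. c) y = c * q y"
proof -
  have "\<And>v. lam v * c + (if 1 \<le> y v then r v * gamma n v y * c else 0)
     = c * (lam v + (if 1 \<le> y v then r v * gamma n v y else 0))"
    by (auto simp: algebra_simps)
  then show ?thesis unfolding J_def q_def by (simp only: sum_distrib_left[symmetric])
qed
lemma J_nonneg: "(\<And>z. 0 \<le> f z) \<Longrightarrow> 0 \<le> J f y"
  unfolding J_def using lam_nn rg_nn by (intro sum_nonneg add_nonneg_nonneg) (auto intro: mult_nonneg_nonneg)
lemma J_ge_term:
  assumes "\<And>z. 0 \<le> f z" "v \<in> {1..n}"
  shows "lam v * f (up v y) \<le> J f y"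
proof -
  have "lam v * f (up v y) \<le> lam v * f (up v y) + (if 1 \<le> y v then r v * gamma n v y * f (dn v y) else 0)"
    using assms rg_nn[OF assms(2), of y] by (auto intro: mult_nonneg_nonneg)
  also have "\<dots> \<le> J f y" unfolding J_def using assms lam_nn rg_nn
    by (intro member_le_sum[where f="\<lambda>v. lam v * f (up v y) + (if 1 \<le> y v then r v * gamma n v y * f (dn v y) else 0)"])
       (auto intro!: add_nonneg_nonneg mult_nonneg_nonneg)
  finally show ?thesis .
qed

lemma sum_Nb: "(\<Sum>z\<in>Nb y. rate n lam r y z * f z) = J f y"
  unfolding sum_rate[OF finite_Nb] J_def by (intro sum.cong refl) (auto simp: Nb_def)

lemma QV: "y \<in> states n \<Longrightarrow> Qf V y = S - (if y = (\<lambda>_. 0) then 0 else 1)"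
  unfolding V_def using Qf_L[of y id a1] r_a1 top_props[of y n] by (auto simp: S_def)

definition Phi :: "state \<Rightarrow> (state \<Rightarrow> ennreal) \<Rightarrow> state \<Rightarrow> ennreal" where
  "Phi i = (\<lambda>k y. if y = i then 0 else
       ennreal (1 / qout n lam r y)
       + infsum (\<lambda>z. ennreal (rate n lam r y z / qout n lam r y) * k z) (states n - {y}))"

lemma hit_Phi: "hit_time n lam r i = lfp (Phi i)" unfolding hit_time_def Phi_def ..

lemma Phi_mono: "mono (Phi i)"
proof (rule monoI, rule le_funI)
  fix k k' :: "state \<Rightarrow> ennreal" and y assume "k \<le> k'"
  then have kk: "\<And>z. k z \<le> k' z" by (simp add: le_fun_def)
  have "infsum (\<lambda>z. ennreal (rate n lam r y z / qout n lam r y) * k z) (states n - {y})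
     \<le> infsum (\<lambda>z. ennreal (rate n lam r y z / qout n lam r y) * k' z) (states n - {y})"
    by (intro infsum_mono mult_left_mono kk) (simp_all add: nonneg_summable_on_complete)
  then show "Phi i k y \<le> Phi i k' y" unfolding Phi_def
    by (auto intro!: add_left_mono)
qed

lemma Phi_states:
  assumes y: "y \<in> states n" "y \<noteq> i"
  shows "Phi i k y = ennreal (1 / q y) + (\<Sum>z\<in>Nb y. ennreal (rate n lam r y z / q y) * k z)"
  unfolding Phi_def using y by (simp add: qout_eq infsum_rate_ennreal)

lemma Phi_real:
  assumes y: "y \<in> states n" "y \<noteq> i" and K: "\<And>z. 0 \<le> K z"
  shows "Phi i (\<lambda>z. ennreal (K z)) y = ennreal ((1 + J K y) / q y)"
proof -
  have qp: "0 < q y" by (rule q_pos)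
  have "(\<Sum>z\<in>Nb y. ennreal (rate n lam r y z / q y) * ennreal (K z)) = (\<Sum>z\<in>Nb y. ennreal (rate n lam r y z / q y * K z))"
    using K qp rate_nonneg by (intro sum.cong refl) (rule ennreal_mult[symmetric]; simp)
  also have "\<dots> = ennreal (\<Sum>z\<in>Nb y. rate n lam r y z / q y * K z)"
    using K qp rate_nonneg by (intro sum_ennreal) simp
  also have "(\<Sum>z\<in>Nb y. rate n lam r y z / q y * K z) = J K y / q y"
    using sum_Nb[of y K] by (simp add: sum_divide_distrib[symmetric])
  finally show ?thesis unfolding Phi_states[OF y] using qp J_nonneg[of K y] K
    by (simp add: add_divide_distrib)
qed

lemma Phi_le_real:
  assumes y: "y \<in> states n" "y \<noteq> i" and K: "\<And>z. 0 \<le> K z" and c: "1 + Qf K y \<le> 0"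
  shows "Phi i (\<lambda>z. ennreal (K z)) y \<le> ennreal (K y)"
proof -
  have qp: "0 < q y" by (rule q_pos)
  have "(1 + J K y) / q y \<le> K y" using c qp unfolding Qf_def by (simp add: divide_le_eq algebra_simps)
  then show ?thesis unfolding Phi_real[OF y K] by (rule ennreal_leI)
qed

end


lemma tot_up: "v \<in> {1..n} \<Longrightarrow> tot n (up v y) = Suc (tot n y)"
proof -
  assume v: "v \<in> {1..n}"
  have "1 \<le> up v y v" by (simp add: up_def)
  from tot_dn[of v n "up v y", OF v this] show ?thesis by (simp only: dn_up)
qed

lemma tot_mono: "(\<forall>w. y w \<le> i w) \<Longrightarrow> tot n y \<le> tot n i"
  unfolding tot_def by (intro sum_mono) auto

context beams begin

definition lmin :: real where "lmin = Min (lam ` {1..n})"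
definition cc :: real where "cc = min 1 (lmin / qM)"

lemma lmin_pos: "0 < lmin" unfolding lmin_def using n1 lam_pos by (subst Min_gr_iff) auto
lemma lmin_le: "v \<in> {1..n} \<Longrightarrow> lmin \<le> lam v" unfolding lmin_def by (intro Min_le) auto
lemma qM_pos: "0 < qM" using q_pos[of "\<lambda>_. 0"] q_le[of "\<lambda>_. 0"] by simp
lemma cc_pos: "0 < cc" unfolding cc_def using lmin_pos qM_pos by simp
lemma cc_le1: "cc \<le> 1" unfolding cc_def by simp
lemma cc_qM: "cc * qM \<le> lmin" unfolding cc_def using qM_pos
  by (simp add: min_def field_simps)

definition uu :: "state \<Rightarrow> state \<Rightarrow> real" where
  "uu i y = (if y \<noteq> (\<lambda>_. 0) \<and> y \<in> states n \<and> (\<forall>w. y w \<le> i w) then cc ^ (tot n i - tot n y) else 0)"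

lemma uu_nn: "0 \<le> uu i y" unfolding uu_def using cc_pos by simp
lemma uu_le1: "uu i y \<le> 1" unfolding uu_def using cc_pos cc_le1 by (simp add: power_le_one)

lemma Qf_uu_nn:
  assumes i: "i \<in> states n" and y: "y \<in> states n" "y \<noteq> (\<lambda>_. 0)" "y \<noteq> i"
  shows "0 \<le> Qf (uu i) y"
proof (cases "\<forall>w. y w \<le> i w")
  case False
  then have "uu i y = 0" unfolding uu_def by auto
  then show ?thesis unfolding Qf_def using J_nonneg[of "uu i" y] uu_nn by simp
next
  case True
  obtain v where v: "v \<in> {1..n}" "y v < i v"
  proof -
    have "\<exists>v\<in>{1..n}. y v \<noteq> i v"
    proof (rule ccontr)
      assume "\<not> ?thesis"
      then have "y = i" using y(1) i unfolding states_def by (auto simp: fun_eq_iff)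
      then show False using y(3) by simp
    qed
    then show ?thesis using True that by (metis le_neq_implies_less)
  qed
  have upi: "\<forall>w. up v y w \<le> i w" using True v by (auto simp: up_def)
  have upn: "up v y \<noteq> (\<lambda>_. 0)" by (auto simp: up_def fun_eq_iff)
  have ups: "up v y \<in> states n" using up_in_states[OF y(1) v(1)] .
  define d where "d = tot n i - tot n y"
  have tl: "tot n (up v y) \<le> tot n i" using tot_mono[OF upi] .
  then have d1: "1 \<le> d" unfolding d_def using tot_up[OF v(1), of y] by simp
  have dd: "tot n i - tot n (up v y) = d - 1" unfolding d_def using tot_up[OF v(1), of y] by simp
  have uy: "uu i y = cc ^ d" unfolding uu_def d_def using True y by simp
  have uup: "uu i (up v y) = cc ^ (d - 1)" unfolding uu_def using upi upn ups dd by simp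
  have "q y * uu i y \<le> qM * cc ^ d" unfolding uy using q_le[of y] cc_pos by (intro mult_right_mono) auto
  also have "\<dots> = (cc * qM) * cc ^ (d - 1)" using d1 by (cases d) (auto simp: algebra_simps)
  also have "\<dots> \<le> lam v * cc ^ (d - 1)" using cc_qM lmin_le[OF v(1)] cc_pos by (intro mult_right_mono) auto
  also have "\<dots> = lam v * uu i (up v y)" unfolding uup ..
  also have "\<dots> \<le> J (uu i) y" by (rule J_ge_term[OF uu_nn v(1)])
  finally show ?thesis unfolding Qf_def by simp
qed

lemma Qf_uu_0:
  assumes i: "i \<in> states n" "i \<noteq> (\<lambda>_. 0)"
  shows "0 < Qf (uu i) (\<lambda>_. 0)"
proof -
  have "\<exists>v\<in>{1..n}. i v \<noteq> 0" using i states_zero[OF i(1)] by blast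
  then obtain v where v: "v \<in> {1..n}" "1 \<le> i v" by force
  let ?z = "(\<lambda>_. 0) :: state"
  have upi: "\<forall>w. up v ?z w \<le> i w" using v by (auto simp: up_def)
  have upn: "up v ?z \<noteq> (\<lambda>_. 0)" by (auto simp: up_def fun_eq_iff)
  have ups: "up v ?z \<in> states n" using up_in_states[OF _ v(1)] by (auto simp: states_def)
  have "uu i (up v ?z) > 0" unfolding uu_def using upi upn ups cc_pos by simp
  then have "0 < lam v * uu i (up v ?z)" using lam_pos[OF v(1)] by simp
  also have "\<dots> \<le> J (uu i) ?z" by (rule J_ge_term[OF uu_nn v(1)])
  finally show ?thesis unfolding Qf_def uu_def by simp
qed

lemma Qf_lin: "Qf (\<lambda>z. a * f z + b * g z + c) y = a * Qf f y + b * Qf g y"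
proof -
  have "J (\<lambda>z. a * f z + b * g z + c) y = J (\<lambda>z. a * f z + b * g z) y + c * q y"
  proof -
    have "J (\<lambda>z. a * f z + b * g z + c) y = J (\<lambda>z. 1 * (a * f z + b * g z) + c * (\<lambda>_. 1) z) y" by simp
    also have "\<dots> = J (\<lambda>z. a * f z + b * g z) y + c * J (\<lambda>_. 1) y" by (subst J_lin) simp
    finally show ?thesis by (simp add: J_one)
  qed
  then show ?thesis unfolding Qf_def J_lin by (simp add: algebra_simps)
qed

definition aV :: real where "aV = 1 / (1 - S)"
definition BB :: "state \<Rightarrow> real" where
  "BB i = (if i = (\<lambda>_. 0) then 0 else (1 + aV * S) / Qf (uu i) (\<lambda>_. 0))"
definition KK :: "state \<Rightarrow> state \<Rightarrow> real" where
  "KK i z = aV * V z + (- BB i) * uu i z + BB i"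

lemma S_nn: "0 \<le> S" unfolding S_def using lam_nn a1_pos by (intro sum_nonneg) (auto intro: mult_nonneg_nonneg less_imp_le)

lemma KK_facts:
  assumes S1: "S < 1" and i: "i \<in> states n"
  shows "\<And>z. 0 \<le> KK i z" "\<And>y. y \<in> states n \<Longrightarrow> y \<noteq> i \<Longrightarrow> 1 + Qf (KK i) y \<le> 0"
proof -
  have aV: "0 < aV" unfolding aV_def using S1 by simp
  have BB: "0 \<le> BB i" unfolding BB_def using Qf_uu_0[OF i] aV S_nn
    by (auto intro!: divide_nonneg_pos add_nonneg_nonneg mult_nonneg_nonneg)
  show "\<And>z. 0 \<le> KK i z" unfolding KK_def
  proof -
    fix z
    have "0 \<le> BB i * (1 - uu i z)" using BB uu_le1[of i z] by simp
    moreover have "0 \<le> aV * V z" using aV V_nonneg[of z] by simp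
    ultimately show "0 \<le> aV * V z + - BB i * uu i z + BB i" by (simp add: algebra_simps)
  qed
  fix y assume y: "y \<in> states n" "y \<noteq> i"
  have Q: "Qf (KK i) y = aV * Qf V y + (- BB i) * Qf (uu i) y"
    unfolding KK_def by (rule Qf_lin)
  show "1 + Qf (KK i) y \<le> 0"
  proof (cases "y = (\<lambda>_. 0)")
    case True
    then have i0: "i \<noteq> (\<lambda>_. 0)" using y by simp
    have "BB i * Qf (uu i) y = 1 + aV * S" unfolding BB_def using i0 Qf_uu_0[OF i i0] True by simp
    then show ?thesis unfolding Q QV[OF y(1)] using True by simp
  next
    case False
    have "0 \<le> BB i * Qf (uu i) y" using BB Qf_uu_nn[OF i y(1) False y(2)] by simp
    moreover have "1 + aV * (S - 1) = 0" unfolding aV_def using S1 by (simp add: field_simps)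
    ultimately show ?thesis unfolding Q QV[OF y(1)] using False by (simp add: algebra_simps)
  qed
qed

lemma hit_le:
  assumes S1: "S < 1" and i: "i \<in> states n"
  shows "\<And>z. z \<in> states n \<Longrightarrow> hit_time n lam r i z \<le> ennreal (KK i z)"
proof -
  define k where "k = (\<lambda>z. if z \<in> states n then ennreal (KK i z) else \<infinity>)"
  note KF = KK_facts[OF S1 i]
  have "Phi i k \<le> k"
  proof (rule le_funI)
    fix y
    show "Phi i k y \<le> k y"
    proof (cases "y \<in> states n \<and> y \<noteq> i")
      case True
      have "Phi i k y = Phi i (\<lambda>z. ennreal (KK i z)) y"
        unfolding Phi_states[OF True[THEN conjunct1] True[THEN conjunct2]]
        using Nb_sub[of y] True by (intro arg_cong2[where f="(+)"] refl sum.cong) (auto simp: k_def)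
      also have "\<dots> \<le> ennreal (KK i y)" by (rule Phi_le_real[OF True[THEN conjunct1] True[THEN conjunct2] KF(1) KF(2)]) (use True in auto)
      finally show ?thesis using True by (simp add: k_def)
    next
      case False
      then show ?thesis by (cases "y = i") (auto simp: Phi_def k_def)
    qed
  qed
  then have "hit_time n lam r i \<le> k" unfolding hit_Phi by (rule lfp_lowerbound)
  then show "\<And>z. z \<in> states n \<Longrightarrow> hit_time n lam r i z \<le> ennreal (KK i z)"
  proof -
    fix z assume z: "z \<in> states n"
    have "hit_time n lam r i z \<le> k z" using \<open>hit_time n lam r i \<le> k\<close> by (simp add: le_fun_def)
    then show "hit_time n lam r i z \<le> ennreal (KK i z)" using z by (simp add: k_def)
  qed
qed

lemma mean_return_fin:
  assumes S1: "S < 1" and i: "i \<in> states n"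
  shows "mean_return n lam r i < \<infinity>"
proof -
  have qp: "0 < q i" by (rule q_pos)
  have "mean_return n lam r i = ennreal (1 / q i) + (\<Sum>z\<in>Nb i. ennreal (rate n lam r i z / q i) * hit_time n lam r i z)"
    unfolding mean_return_def using i by (simp add: qout_eq infsum_rate_ennreal)
  also have "\<dots> \<le> ennreal (1 / q i) + (\<Sum>z\<in>Nb i. ennreal (rate n lam r i z / q i) * ennreal (KK i z))"
    using hit_le[OF S1 i] Nb_sub[OF i] by (intro add_left_mono sum_mono mult_left_mono) auto
  also have "\<dots> < \<infinity>"
  proof -
    have "(\<Sum>z\<in>Nb i. ennreal (rate n lam r i z / q i) * ennreal (KK i z)) < \<infinity>"
      by (simp add: finite_Nb ennreal_mult_less_top)
    then show ?thesis by simp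
  qed
  finally show ?thesis .
qed

end


context beams begin

abbreviation o0 :: state where "o0 \<equiv> (\<lambda>_. 0)"

definition Gop :: "(state \<Rightarrow> real) \<Rightarrow> state \<Rightarrow> real" where
  "Gop f y = (if y = o0 then 0 else J f y / q y)"
definition one' :: "state \<Rightarrow> real" where "one' y = (if y = o0 then 0 else 1)"
definition Gp :: "nat \<Rightarrow> state \<Rightarrow> real" where "Gp j = (Gop ^^ j) one'"
definition W :: "nat \<Rightarrow> state \<Rightarrow> real" where "W j = (Gop ^^ j) V"
definition psi :: "nat \<Rightarrow> state \<Rightarrow> real" where "psi m y = (1 / qM) * (\<Sum>j<m. Gp j y)"

lemma J_mono_Nb:
  assumes fg: "\<And>z. z \<in> Nb y \<Longrightarrow> f z \<le> g z"
  shows "J f y \<le> J g y"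
  unfolding J_def
proof (intro sum_mono add_mono)
  fix v assume v: "v \<in> {1..n}"
  have "up v y \<in> Nb y" using v by (auto simp: Nb_def)
  then show "lam v * f (up v y) \<le> lam v * g (up v y)" using lam_nn[OF v] fg by (intro mult_left_mono) auto
  show "(if 1 \<le> y v then r v * gamma n v y * f (dn v y) else 0) \<le> (if 1 \<le> y v then r v * gamma n v y * g (dn v y) else 0)"
  proof (cases "1 \<le> y v")
    case True
    then have "dn v y \<in> Nb y" using v by (auto simp: Nb_def)
    then show ?thesis using True rg_nn[OF v, of y] fg by (auto intro: mult_left_mono)
  qed simp
qed

lemma J_sum: "finite A \<Longrightarrow> J (\<lambda>z. \<Sum>j\<in>A. f j z) y = (\<Sum>j\<in>A. J (f j) y)"
proof (induction A rule: finite_induct)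
  case empty
  then show ?case using J_const[of 0 y] by simp
next
  case (insert x F)
  have "J (\<lambda>z. \<Sum>j\<in>insert x F. f j z) y = J (\<lambda>z. 1 * f x z + 1 * (\<Sum>j\<in>F. f j z)) y"
    using insert by simp
  also have "\<dots> = J (f x) y + J (\<lambda>z. \<Sum>j\<in>F. f j z) y" by (subst J_lin) simp
  finally show ?case using insert by simp
qed

lemma J_cmult: "J (\<lambda>z. c * f z) y = c * J f y"
  using J_lin[of c f 0 f y] by simp

lemma Gp_nn: "0 \<le> Gp j y"
proof (induction j arbitrary: y)
  case 0 then show ?case by (simp add: Gp_def one'_def)
next
  case (Suc j)
  have "0 \<le> J (Gp j) y" by (rule J_nonneg) (use Suc in auto)
  then show ?case using q_pos[of y] by (simp add: Gp_def Gop_def)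
qed

lemma Gp_Suc: "Gp (Suc j) y = Gop (Gp j) y" by (simp add: Gp_def)
lemma W_Suc: "W (Suc j) y = Gop (W j) y" by (simp add: W_def)

lemma Gop_o: "Gop f o0 = 0" by (simp add: Gop_def)

lemma Gop_mono: "y \<in> states n \<Longrightarrow> (\<And>z. z \<in> states n \<Longrightarrow> f z \<le> g z) \<Longrightarrow> Gop f y \<le> Gop g y"
  unfolding Gop_def using Nb_sub[of y] q_pos[of y]
  by (auto intro!: divide_right_mono J_mono_Nb)

lemma Nb_V: "z \<in> Nb y \<Longrightarrow> V z \<le> V y + A1"
proof -
  assume "z \<in> Nb y"
  then obtain u where u: "u \<in> {1..n}" "z = up u y \<or> (1 \<le> y u \<and> z = dn u y)" unfolding Nb_def by auto
  from u(2) show ?thesis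
  proof
    assume "z = up u y" then show ?thesis using V_up[OF u(1)] a1_le[OF u(1)] by simp
  next
    assume "1 \<le> y u \<and> z = dn u y" then show ?thesis using V_dn[OF u(1)] a1_pos[OF u(1)] A1_nn by simp
  qed
qed

lemma GV:
  assumes S1: "1 \<le> S" and y: "y \<in> states n"
  shows "V y \<le> Gop V y"
proof (cases "y = o0")
  case True then show ?thesis by (simp add: Gop_def V_zero)
next
  case False
  have "J V y = q y * V y + Qf V y" unfolding Qf_def by simp
  also have "Qf V y = S - 1" using QV[OF y] False by simp
  finally have "q y * V y \<le> J V y" using S1 by simp
  then show ?thesis using False q_pos[of y] by (simp add: Gop_def field_simps)
qed

lemma W_ge:
  assumes S1: "1 \<le> S"
  shows "y \<in> states n \<Longrightarrow> V y \<le> W j y"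
proof (induction j arbitrary: y)
  case 0 then show ?case by (simp add: W_def)
next
  case (Suc j)
  have "V y \<le> Gop V y" by (rule GV[OF S1 Suc.prems])
  also have "\<dots> \<le> Gop (W j) y" by (rule Gop_mono[OF Suc.prems Suc.IH])
  finally show ?case by (simp add: W_Suc)
qed

lemma W_le: "y \<in> states n \<Longrightarrow> W j y \<le> (V y + A1 * real j) * Gp j y"
proof (induction j arbitrary: y)
  case 0
  then show ?case by (cases "y = o0") (auto simp: W_def Gp_def one'_def V_zero)
next
  case (Suc j)
  show ?case
  proof (cases "y = o0")
    case True then show ?thesis by (simp add: W_Suc Gp_Suc Gop_o)
  next
    case False
    have "J (W j) y \<le> J (\<lambda>z. (V y + A1 * real (Suc j)) * Gp j z) y"
    proof (rule J_mono_Nb)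
      fix z assume z: "z \<in> Nb y"
      have zs: "z \<in> states n" using Nb_sub[OF Suc.prems] z by auto
      have "W j z \<le> (V z + A1 * real j) * Gp j z" by (rule Suc.IH[OF zs])
      also have "\<dots> \<le> (V y + A1 * real (Suc j)) * Gp j z"
        using Nb_V[OF z] Gp_nn[of j z] by (intro mult_right_mono) (auto simp: algebra_simps)
      finally show "W j z \<le> (V y + A1 * real (Suc j)) * Gp j z" .
    qed
    then have "J (W j) y / q y \<le> (V y + A1 * real (Suc j)) * (J (Gp j) y / q y)"
      using q_pos[of y] by (simp add: J_cmult divide_right_mono)
    then show ?thesis using False by (simp add: W_Suc Gp_Suc Gop_def)
  qed
qed

lemma Gp_lower:
  assumes S1: "1 \<le> S" and y: "y \<in> states n"
  shows "V y / (V y + A1 * real j) \<le> Gp j y"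
proof (cases "V y = 0")
  case True then show ?thesis using Gp_nn by simp
next
  case False
  then have Vp: "0 < V y" using V_nonneg[of y] by simp
  have "V y \<le> (V y + A1 * real j) * Gp j y" using W_ge[OF S1 y, of j] W_le[OF y, of j] by simp
  moreover have "0 < V y + A1 * real j" using Vp A1_nn by (simp add: add_pos_nonneg)
  ultimately show ?thesis by (simp add: divide_le_eq mult.commute)
qed

lemma psi_nn: "0 \<le> psi m y" unfolding psi_def using qM_pos Gp_nn by (simp add: sum_nonneg)

lemma Phi_iter:
  "y \<in> states n \<Longrightarrow> ennreal (psi m y) \<le> ((Phi o0) ^^ m) bot y"
proof (induction m arbitrary: y)
  case 0 then show ?case by (simp add: psi_def)
next
  case (Suc m)
  show ?case
  proof (cases "y = o0")
    case True
    have "Gp j o0 = 0" for j by (cases j) (simp_all add: Gp_def one'_def Gop_def)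
    then show ?thesis using True by (simp add: psi_def)
  next
    case False
    have "((Phi o0) ^^ Suc m) bot y = Phi o0 (((Phi o0) ^^ m) bot) y" by simp
    also have "\<dots> = ennreal (1 / q y) + (\<Sum>z\<in>Nb y. ennreal (rate n lam r y z / q y) * ((Phi o0) ^^ m) bot z)"
      by (rule Phi_states[OF Suc.prems False])
    also have "\<dots> \<ge> ennreal (1 / q y) + (\<Sum>z\<in>Nb y. ennreal (rate n lam r y z / q y) * ennreal (psi m z))"
      using Nb_sub[OF Suc.prems] by (intro add_left_mono sum_mono mult_left_mono Suc.IH) auto
    also have "ennreal (1 / q y) + (\<Sum>z\<in>Nb y. ennreal (rate n lam r y z / q y) * ennreal (psi m z))
        = Phi o0 (\<lambda>z. ennreal (psi m z)) y" by (rule Phi_states[OF Suc.prems False, symmetric])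
    also have "\<dots> = ennreal ((1 + J (psi m) y) / q y)" by (rule Phi_real[OF Suc.prems False psi_nn])
    also have "(1 + J (psi m) y) / q y \<ge> psi (Suc m) y"
    proof -
      have J: "J (psi m) y = (1 / qM) * (\<Sum>j<m. J (Gp j) y)"
        unfolding psi_def J_cmult J_sum[OF finite_lessThan] ..
      have "psi (Suc m) y = (1 / qM) * (Gp 0 y + (\<Sum>j<m. Gp (Suc j) y))"
        unfolding psi_def by (simp only: sum.lessThan_Suc_shift)
      also have "\<dots> = (1 / qM) * (1 + (\<Sum>j<m. J (Gp j) y / q y))"
        using False by (simp add: Gp_def one'_def Gop_def)
      also have "\<dots> = 1 / qM + J (psi m) y / q y" unfolding J
        by (simp add: sum_divide_distrib algebra_simps)
      also have "\<dots> \<le> 1 / q y + J (psi m) y / q y"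
        using q_pos[of y] q_le[of y] by (simp add: frac_le)
      finally show ?thesis by (simp add: add_divide_distrib)
    qed
    ultimately show ?thesis by (meson ennreal_leI order.trans)
  qed
qed

lemma iter_le_lfp: "((Phi i) ^^ m) bot \<le> lfp (Phi i)"
proof (induction m)
  case 0 then show ?case by (simp add: le_fun_def)
next
  case (Suc m)
  have "((Phi i) ^^ Suc m) bot = Phi i (((Phi i) ^^ m) bot)" by simp
  also have "\<dots> \<le> Phi i (lfp (Phi i))" using Phi_mono Suc by (rule monoD)
  also have "\<dots> = lfp (Phi i)" using lfp_unfold[OF Phi_mono] by simp
  finally show ?case .
qed

lemma o0_states: "o0 \<in> states n" by (simp add: states_def)

lemma mean_return_inf:
  assumes S1: "1 \<le> S"
  shows "mean_return n lam r o0 = \<infinity>"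
proof -
  let ?e = "up 1 o0"
  have one: "(1::nat) \<in> {1..n}" using n1 by simp
  have es: "?e \<in> states n" by (rule up_in_states[OF o0_states one])
  have Ve: "V ?e = a1 1" using V_up[OF one, of o0] V_zero by simp
  have al: "0 < a1 1" "a1 1 \<le> A1" using a1_pos[OF one] a1_le[OF one] by auto
  have A1p: "0 < A1" using al by simp
  define c where "c = a1 1 / (qM * A1)"
  have cp: "0 < c" unfolding c_def using al qM_pos by simp
  have lowb: "ennreal (c * harm m) \<le> hit_time n lam r o0 ?e" for m
  proof -
    have "c * harm m = (\<Sum>j<m. c * inverse (real (Suc j)))" unfolding harm_altdef by (simp add: sum_distrib_left)
    also have "\<dots> = (1 / qM) * (\<Sum>j<m. (a1 1 / A1) * inverse (real (Suc j)))"
      unfolding sum_distrib_left c_def by (intro sum.cong refl) (simp add: field_simps)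
    also have "\<dots> \<le> (1 / qM) * (\<Sum>j<m. V ?e / (V ?e + A1 * real j))"
    proof (intro mult_left_mono sum_mono)
      fix j
      have "a1 1 + A1 * real j \<le> A1 * real (Suc j)" using al by (simp add: algebra_simps)
      moreover have "0 < a1 1 + A1 * real j" using al A1p by (simp add: add_pos_nonneg)
      ultimately show "a1 1 / A1 * inverse (real (Suc j)) \<le> V ?e / (V ?e + A1 * real j)"
        unfolding Ve using al A1p by (simp add: field_simps frac_le)
    qed (use qM_pos in simp)
    also have "\<dots> \<le> psi m ?e" unfolding psi_def
      using Gp_lower[OF S1 es] qM_pos by (intro mult_left_mono sum_mono) auto
    finally have "ennreal (c * harm m) \<le> ennreal (psi m ?e)" by (rule ennreal_leI)
    also have "\<dots> \<le> ((Phi o0) ^^ m) bot ?e" by (rule Phi_iter[OF es])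
    also have "\<dots> \<le> hit_time n lam r o0 ?e" using iter_le_lfp[where i=o0 and m=m] unfolding hit_Phi le_fun_def by blast
    finally show ?thesis .
  qed
  have hinf: "hit_time n lam r o0 ?e = \<infinity>"
  proof (cases "hit_time n lam r o0 ?e" rule: ennreal_cases)
    case (real h)
    have "\<forall>m. harm m \<le> h / c"
    proof
      fix m
      have "c * harm m \<le> h" using lowb[of m] real by (simp add: ennreal_le_iff)
      then show "harm m \<le> h / c" using cp by (simp add: field_simps)
    qed
    moreover have "\<exists>m. h / c + 1 \<le> harm m"
      using harm_at_top unfolding filterlim_at_top eventually_sequentially by blast
    ultimately show ?thesis by (meson add_le_same_cancel1 linorder_not_le order.trans zero_less_one)
  qed simp
  have rp: "0 < rate n lam r o0 ?e / q o0" using rate_up_pos[OF one] q_pos by simp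
  have "?e \<in> Nb o0" using one unfolding Nb_def by auto
  then have "ennreal (rate n lam r o0 ?e / q o0) * hit_time n lam r o0 ?e
     \<le> (\<Sum>z\<in>Nb o0. ennreal (rate n lam r o0 z / q o0) * hit_time n lam r o0 z)"
    by (intro member_le_sum) (auto simp: finite_Nb)
  also have "\<dots> \<le> mean_return n lam r o0"
    unfolding mean_return_def using o0_states by (simp add: qout_eq infsum_rate_ennreal)
  finally show ?thesis using hinf rate_up_pos[OF one, of o0] q_pos[of o0] by (simp add: ennreal_mult_top top_unique)
qed

end


lemma fs_summable:
  fixes f :: "'a \<Rightarrow> real"
  assumes "finite {x. f x \<noteq> 0}"
  shows "f summable_on A"
proof -
  have "f summable_on (A \<inter> {x. f x \<noteq> 0})" using assms by simp
  then show ?thesis by (subst summable_on_cong_neutral[where T="A \<inter> {x. f x \<noteq> 0}" and g=f]) auto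
qed

lemma fs_mult: "finite {x. f x \<noteq> 0} \<Longrightarrow> finite {x. f x * g x \<noteq> (0::real)}"
  by (rule finite_subset[of _ "{x. f x \<noteq> 0}"]) auto

context beams begin

definition fsupp :: "(state \<Rightarrow> real) \<Rightarrow> bool" where
  "fsupp \<mu> \<longleftrightarrow> (\<forall>x. x \<notin> states n \<longrightarrow> \<mu> x = 0) \<and> finite {x. \<mu> x \<noteq> 0}"

definition step :: "(state \<Rightarrow> real) \<Rightarrow> state \<Rightarrow> real" where
  "step \<mu> x = (if x \<in> states n then \<mu> x + (InS \<mu> x - q x * \<mu> x) / qM else 0)"

lemma InS_supp: "finite {x. \<mu> x \<noteq> 0} \<Longrightarrow> finite {x. InS \<mu> x \<noteq> 0}"
proof -
  assume f: "finite {x. \<mu> x \<noteq> 0}"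
  have "{x. InS \<mu> x \<noteq> 0} \<subseteq> (\<Union>v\<in>{1..n}. up v ` {x. \<mu> x \<noteq> 0} \<union> dn v ` {x. \<mu> x \<noteq> 0})"
  proof
    fix x assume "x \<in> {x. InS \<mu> x \<noteq> 0}"
    then obtain v where v: "v \<in> {1..n}" "(if 1 \<le> x v then lam v * \<mu> (dn v x) else 0) + r v * gamma n v (up v x) * \<mu> (up v x) \<noteq> 0"
      unfolding InS_def using sum.not_neutral_contains_not_neutral by blast
    then have "(1 \<le> x v \<and> \<mu> (dn v x) \<noteq> 0) \<or> \<mu> (up v x) \<noteq> 0" by (auto split: if_splits)
    then show "x \<in> (\<Union>v\<in>{1..n}. up v ` {x. \<mu> x \<noteq> 0} \<union> dn v ` {x. \<mu> x \<noteq> 0})"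
    proof
      assume h: "1 \<le> x v \<and> \<mu> (dn v x) \<noteq> 0"
      then have "x = up v (dn v x)" by (simp add: up_dn)
      then show ?thesis using v(1) h by blast
    next
      assume h: "\<mu> (up v x) \<noteq> 0"
      have "x = dn v (up v x)" by (simp add: dn_up)
      then show ?thesis using v(1) h by blast
    qed
  qed
  then show ?thesis by (rule finite_subset) (use f in auto)
qed

lemma step_fsupp: "fsupp \<mu> \<Longrightarrow> fsupp (step \<mu>)"
proof -
  assume h: "fsupp \<mu>"
  have f1: "finite {x. \<mu> x \<noteq> 0}" using h fsupp_def by blast
  have "{x. step \<mu> x \<noteq> 0} \<subseteq> {x. \<mu> x \<noteq> 0} \<union> {x. InS \<mu> x \<noteq> 0}"
    unfolding step_def by auto
  then have "finite {x. step \<mu> x \<noteq> 0}" by (rule finite_subset) (use f1 InS_supp in auto)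
  then show ?thesis unfolding fsupp_def step_def by simp
qed

lemma fsupp_summ: "fsupp \<mu> \<Longrightarrow> (\<lambda>y. \<mu> y * g y) summable_on A"
  unfolding fsupp_def by (intro fs_summable fs_mult) auto

lemma step_sum:
  assumes fs: "fsupp \<mu>"
  shows "infsum (\<lambda>x. step \<mu> x * g x) (states n) = infsum (\<lambda>x. \<mu> x * g x) (states n) + (1 / qM) * infsum (\<lambda>y. \<mu> y * Qf g y) (states n)"
proof -
  have f1: "finite {x. \<mu> x \<noteq> 0}" using fs fsupp_def by blast
  have h1: "\<And>v. v\<in>{1..n} \<Longrightarrow> (\<lambda>y. \<mu> y * g (up v y)) summable_on states n"
    by (rule fsupp_summ[OF fs])
  have h2: "\<And>v. v\<in>{1..n} \<Longrightarrow> (\<lambda>y. if 1 \<le> y v then gamma n v y * \<mu> y * g (dn v y) else 0) summable_on states n"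
    by (rule fs_summable, rule finite_subset[OF _ f1]) auto
  note SW = swap[OF h1 h2]
  have sA: "(\<lambda>x. \<mu> x * g x) summable_on states n" by (rule fsupp_summ[OF fs])
  have sB: "(\<lambda>x. \<mu> x * (q x * g x)) summable_on states n" by (rule fsupp_summ[OF fs])
  have e: "\<And>x. x \<in> states n \<Longrightarrow> step \<mu> x * g x = \<mu> x * g x + (1 / qM) * (g x * InS \<mu> x - \<mu> x * (q x * g x))"
    unfolding step_def by (simp add: algebra_simps add_divide_distrib diff_divide_distrib)
  have "infsum (\<lambda>x. step \<mu> x * g x) (states n) = infsum (\<lambda>x. \<mu> x * g x + (1 / qM) * (g x * InS \<mu> x - \<mu> x * (q x * g x))) (states n)"
    using e by (rule infsum_cong)
  also have "\<dots> = infsum (\<lambda>x. \<mu> x * g x) (states n) + (1 / qM) * (infsum (\<lambda>x. g x * InS \<mu> x) (states n) - infsum (\<lambda>x. \<mu> x * (q x * g x)) (states n))"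
  proof -
    have sb: "(\<lambda>x. g x * InS \<mu> x) summable_on states n" by (rule SW(1))
    have sd: "(\<lambda>x. g x * InS \<mu> x - \<mu> x * (q x * g x)) summable_on states n" by (rule summable_on_diff_r[OF sb sB])
    have "infsum (\<lambda>x. \<mu> x * g x + (1 / qM) * (g x * InS \<mu> x - \<mu> x * (q x * g x))) (states n)
       = infsum (\<lambda>x. \<mu> x * g x) (states n) + infsum (\<lambda>x. (1 / qM) * (g x * InS \<mu> x - \<mu> x * (q x * g x))) (states n)"
      by (rule infsum_add[OF sA summable_on_cmult_right[OF sd]])
    also have "infsum (\<lambda>x. (1 / qM) * (g x * InS \<mu> x - \<mu> x * (q x * g x))) (states n)
       = (1 / qM) * infsum (\<lambda>x. g x * InS \<mu> x - \<mu> x * (q x * g x)) (states n)"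
      by (rule infsum_cmult_right[OF sd])
    also have "infsum (\<lambda>x. g x * InS \<mu> x - \<mu> x * (q x * g x)) (states n)
       = infsum (\<lambda>x. g x * InS \<mu> x) (states n) - infsum (\<lambda>x. \<mu> x * (q x * g x)) (states n)"
      by (rule infsum_diff_r[OF sb sB])
    finally show ?thesis .
  qed
  also have "infsum (\<lambda>x. g x * InS \<mu> x) (states n) - infsum (\<lambda>x. \<mu> x * (q x * g x)) (states n) = infsum (\<lambda>y. \<mu> y * Qf g y) (states n)"
  proof -
    have "infsum (\<lambda>y. \<mu> y * Qf g y) (states n) = infsum (\<lambda>y. \<mu> y * J g y - \<mu> y * (q y * g y)) (states n)"
      by (intro infsum_cong) (simp add: Qf_def algebra_simps)
    also have "\<dots> = infsum (\<lambda>y. \<mu> y * J g y) (states n) - infsum (\<lambda>y. \<mu> y * (q y * g y)) (states n)"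
      by (rule infsum_diff_r[OF SW(2) sB])
    finally have X: "infsum (\<lambda>y. \<mu> y * Qf g y) (states n) = infsum (\<lambda>y. \<mu> y * J g y) (states n) - infsum (\<lambda>y. \<mu> y * (q y * g y)) (states n)" .
    show ?thesis using X SW(3) by linarith
  qed
  finally show ?thesis .
qed

lemma InS_nn: "(\<And>y. 0 \<le> \<mu> y) \<Longrightarrow> 0 \<le> InS \<mu> x"
  unfolding InS_def using lam_nn r_nn gamma_nonneg
  by (intro sum_nonneg add_nonneg_nonneg) (auto intro!: mult_nonneg_nonneg)

lemma step_nn: "(\<And>y. 0 \<le> \<mu> y) \<Longrightarrow> 0 \<le> step \<mu> x"
proof -
  assume h: "\<And>y. 0 \<le> \<mu> y"
  have "0 \<le> \<mu> x * (qM - q x) / qM" using h q_le[of x] qM_pos by simp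
  moreover have "0 \<le> InS \<mu> x / qM" using InS_nn[OF h] qM_pos by simp
  moreover have "\<mu> x + (InS \<mu> x - q x * \<mu> x) / qM = \<mu> x * (qM - q x) / qM + InS \<mu> x / qM"
    using qM_pos by (simp add: field_simps)
  ultimately show ?thesis unfolding step_def by simp
qed

definition mu :: "nat \<Rightarrow> state \<Rightarrow> real" where "mu k = (step ^^ k) (\<lambda>x. if x = (\<lambda>_. 0) then 1 else 0)"

lemma mu_Suc: "mu (Suc k) = step (mu k)" by (simp add: mu_def)

lemma mu_fsupp: "fsupp (mu k)"
proof (induction k)
  case 0
  have "{x. (if x = (\<lambda>_. (0::nat)) then 1 else (0::real)) \<noteq> 0} = {\<lambda>_. 0}" by auto
  then show ?case unfolding fsupp_def mu_def using o0_states by auto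
next
  case (Suc k) then show ?case by (simp add: mu_Suc step_fsupp)
qed

lemma mu_nn: "0 \<le> mu k x"
proof (induction k arbitrary: x)
  case 0 then show ?case by (simp add: mu_def)
next
  case (Suc k) then show ?case by (simp add: mu_Suc step_nn)
qed

lemma mu_mass: "infsum (mu k) (states n) = 1"
proof (induction k)
  case 0
  have "infsum (mu 0) (states n) = infsum (mu 0) {\<lambda>_. 0}"
    by (intro infsum_cong_neutral) (auto simp: mu_def o0_states)
  then show ?case by (simp add: mu_def)
next
  case (Suc k)
  have Q1: "Qf (\<lambda>_. 1) y = 0" for y unfolding Qf_def by (simp add: J_one)
  have "infsum (mu (Suc k)) (states n) = infsum (\<lambda>x. step (mu k) x * 1) (states n)" by (simp add: mu_Suc)
  also have "\<dots> = infsum (\<lambda>x. mu k x * 1) (states n)" unfolding step_sum[OF mu_fsupp] Q1 by simp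
  finally show ?case using Suc by simp
qed

lemma mu_le1: "x \<in> states n \<Longrightarrow> mu k x \<le> 1"
proof -
  assume x: "x \<in> states n"
  have "sum (mu k) {x} \<le> infsum (mu k) (states n)"
    using x mu_nn by (intro finite_sum_le_infsum fsupp_summ[OF mu_fsupp, of k "\<lambda>_. 1", simplified]) auto
  then show ?thesis using mu_mass by simp
qed

end


context beams begin

lemma Vw1: "Vw 1 = V"
proof -
  have "L (av 1) n = L a1 n" unfolding L_def av_def by (intro ext sum.cong) auto
  then show ?thesis unfolding Vw_def V_def .
qed

lemma QV2:
  assumes y: "y \<in> states n"
  shows "Qf (\<lambda>z. (V z)^2) y \<le> A1 + A2 - 2 * (1 - S) * V y"
proof -
  have one: "(1::nat) \<in> {1..n}" using n1 by simp
  have Sv1: "Sv 1 = S" unfolding Sv_def S_def av_def by (intro sum.cong) auto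
  have A21: "A2v 1 = A2" unfolding A2v_def A2_def av_def by (intro sum.cong) auto
  have "(if y \<noteq> (\<lambda>_. 0) \<and> 1 \<le> topb n y then a1 (topb n y) else 0) \<le> A1"
    using a1_le top_props[OF y] A1_nn by auto
  then show ?thesis using QVw[OF y one] unfolding Vw1 Sv1 A21 by (simp add: algebra_simps)
qed

definition EE :: "nat \<Rightarrow> real" where "EE k = infsum (\<lambda>x. mu k x * V x) (states n)"
definition YY :: "nat \<Rightarrow> real" where "YY k = infsum (\<lambda>x. mu k x * (V x)^2) (states n)"

lemma YY_step:
  shows "YY (Suc k) \<le> YY k + (1 / qM) * ((A1 + A2) - 2 * (1 - S) * EE k)"
proof -
  have E: "YY (Suc k) = YY k + (1 / qM) * infsum (\<lambda>y. mu k y * Qf (\<lambda>z. (V z)^2) y) (states n)"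
    unfolding YY_def mu_Suc by (rule step_sum[OF mu_fsupp])
  have I1: "infsum (\<lambda>y. mu k y * Qf (\<lambda>z. (V z)^2) y) (states n) \<le> infsum (\<lambda>y. mu k y * (A1 + A2) - 2 * (1 - S) * (mu k y * V y)) (states n)"
  proof (rule infsum_mono)
    show "(\<lambda>y. mu k y * Qf (\<lambda>z. (V z)^2) y) summable_on states n" by (rule fsupp_summ[OF mu_fsupp])
    show "(\<lambda>y. mu k y * (A1 + A2) - 2 * (1 - S) * (mu k y * V y)) summable_on states n"
      by (intro summable_on_diff_r summable_on_cmult_right fsupp_summ[OF mu_fsupp])
    fix y assume y: "y \<in> states n"
    have "mu k y * Qf (\<lambda>z. (V z)^2) y \<le> mu k y * (A1 + A2 - 2 * (1 - S) * V y)"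
      by (rule mult_left_mono[OF QV2[OF y] mu_nn])
    then show "mu k y * Qf (\<lambda>z. (V z)^2) y \<le> mu k y * (A1 + A2) - 2 * (1 - S) * (mu k y * V y)"
      by (simp add: algebra_simps)
  qed
  have I2: "infsum (\<lambda>y. mu k y * (A1 + A2) - 2 * (1 - S) * (mu k y * V y)) (states n) = (A1 + A2) - 2 * (1 - S) * EE k"
  proof -
    have s1: "(\<lambda>y. mu k y * (A1 + A2)) summable_on states n" by (rule fsupp_summ[OF mu_fsupp])
    have s2: "(\<lambda>y. 2 * (1 - S) * (mu k y * V y)) summable_on states n" by (intro summable_on_cmult_right fsupp_summ[OF mu_fsupp])
    have s0: "mu k summable_on states n" using fsupp_summ[OF mu_fsupp, of k "\<lambda>_. 1"] by simp
    have m1: "infsum (\<lambda>y. mu k y * (A1 + A2)) (states n) = A1 + A2"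
      using infsum_cmult_left[of "A1 + A2" "mu k" "states n"] mu_mass[of k] s0 by simp
    have m2: "infsum (\<lambda>y. 2 * (1 - S) * (mu k y * V y)) (states n) = 2 * (1 - S) * EE k"
      unfolding EE_def by (rule infsum_cmult_right[OF fsupp_summ[OF mu_fsupp]])
    show ?thesis unfolding infsum_diff_r[OF s1 s2] m1 m2 ..
  qed
  have "(1 / qM) * infsum (\<lambda>y. mu k y * Qf (\<lambda>z. (V z)^2) y) (states n) \<le> (1 / qM) * ((A1 + A2) - 2 * (1 - S) * EE k)"
    using I1 I2 qM_pos by (intro mult_left_mono) auto
  then show ?thesis unfolding E by simp
qed

lemma YY_nn: "0 \<le> YY k" unfolding YY_def using mu_nn by (intro infsum_nonneg) auto
lemma YY_0: "YY 0 = 0"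
proof -
  have "YY 0 = infsum (\<lambda>x. mu 0 x * (V x)^2) {\<lambda>_. 0}"
    unfolding YY_def by (intro infsum_cong_neutral) (auto simp: mu_def o0_states)
  then show ?thesis by (simp add: mu_def V_zero)
qed

definition EBn :: real where "EBn = (A1 + A2) / (2 * (1 - S))"

lemma EE_sum:
  assumes S1: "S < 1"
  shows "(\<Sum>k<m. EE k) \<le> real m * EBn"
proof -
  have "YY m \<le> YY 0 + (1 / qM) * (\<Sum>k<m. (A1 + A2) - 2 * (1 - S) * EE k)"
  proof (induction m)
    case 0 then show ?case by simp
  next
    case (Suc m)
    have "YY (Suc m) \<le> YY m + (1 / qM) * ((A1 + A2) - 2 * (1 - S) * EE m)" by (rule YY_step)
    also have "\<dots> \<le> YY 0 + (1 / qM) * (\<Sum>k<m. (A1 + A2) - 2 * (1 - S) * EE k) + (1 / qM) * ((A1 + A2) - 2 * (1 - S) * EE m)"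
      using Suc by simp
    finally show ?case by (simp add: algebra_simps)
  qed
  then have "0 \<le> (1 / qM) * (\<Sum>k<m. (A1 + A2) - 2 * (1 - S) * EE k)" using YY_0 YY_nn[of m] by simp
  then have "0 \<le> (\<Sum>k<m. (A1 + A2) - 2 * (1 - S) * EE k)" using qM_pos by (simp add: zero_le_divide_iff)
  then have "2 * (1 - S) * (\<Sum>k<m. EE k) \<le> real m * (A1 + A2)"
    by (simp add: sum_subtractf sum_distrib_left)
  then show ?thesis unfolding EBn_def using S1 by (simp add: field_simps)
qed

definition nu :: "nat \<Rightarrow> state \<Rightarrow> real" where "nu m x = (\<Sum>k<Suc m. mu k x) / real (Suc m)"

lemma nu_nn: "0 \<le> nu m x" unfolding nu_def using mu_nn by (simp add: sum_nonneg)
lemma nu_le1: "x \<in> states n \<Longrightarrow> nu m x \<le> 1"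
proof -
  assume x: "x \<in> states n"
  have "(\<Sum>k<Suc m. mu k x) \<le> (\<Sum>k<Suc m. 1)" using mu_le1[OF x] by (intro sum_mono) auto
  then show ?thesis unfolding nu_def by (simp add: divide_le_eq)
qed
lemma nu_out: "x \<notin> states n \<Longrightarrow> nu m x = 0"
  unfolding nu_def using mu_fsupp unfolding fsupp_def by simp

lemma nu_sum:
  assumes fin: "\<And>k. finite {x. mu k x * g x \<noteq> 0}"
  shows "(\<lambda>x. nu m x * g x) summable_on states n \<and>
    infsum (\<lambda>x. nu m x * g x) (states n) = (\<Sum>k<Suc m. infsum (\<lambda>x. mu k x * g x) (states n)) / real (Suc m)"
proof -
  have e: "(\<lambda>x. nu m x * g x) = (\<lambda>x. (1 / real (Suc m)) * (\<Sum>k<Suc m. mu k x * g x))"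
    unfolding nu_def by (intro ext) (simp add: sum_distrib_right[symmetric] del: sum.lessThan_Suc)
  have s: "\<And>k. k \<in> {..<Suc m} \<Longrightarrow> (\<lambda>x. mu k x * g x) summable_on states n"
    using fin by (intro fs_summable) auto
  have I: "(\<lambda>x. \<Sum>k<Suc m. mu k x * g x) summable_on states n \<and>
     infsum (\<lambda>x. \<Sum>k<Suc m. mu k x * g x) (states n) = (\<Sum>k<Suc m. infsum (\<lambda>x. mu k x * g x) (states n))"
    by (rule infsum_sum_fin) (use s in auto)
  have "(\<lambda>x. (1 / real (Suc m)) * (\<Sum>k<Suc m. mu k x * g x)) summable_on states n"
    using I by (intro summable_on_cmult_right) blast
  moreover have "infsum (\<lambda>x. (1 / real (Suc m)) * (\<Sum>k<Suc m. mu k x * g x)) (states n) = (1 / real (Suc m)) * (\<Sum>k<Suc m. infsum (\<lambda>x. mu k x * g x) (states n))"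
    using I by (subst infsum_cmult_right) auto
  ultimately show ?thesis unfolding e by simp
qed


lemma nu_mass: "infsum (nu m) (states n) = 1"
proof -
  have "infsum (\<lambda>x. nu m x * 1) (states n) = (\<Sum>k<Suc m. infsum (\<lambda>x. mu k x * 1) (states n)) / real (Suc m)"
    using nu_sum[of "\<lambda>_. 1"] mu_fsupp unfolding fsupp_def by auto
  then show ?thesis using mu_mass by simp
qed

lemma nu_V:
  assumes S1: "S < 1"
  shows "(\<lambda>x. nu m x * V x) summable_on states n" "infsum (\<lambda>x. nu m x * V x) (states n) \<le> EBn"
proof -
  have fin: "\<And>k. finite {x. mu k x * V x \<noteq> 0}" using mu_fsupp unfolding fsupp_def by (intro fs_mult) auto
  note N = nu_sum[OF fin, of m]
  show "(\<lambda>x. nu m x * V x) summable_on states n" using N by blast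
  have "(\<Sum>k<Suc m. infsum (\<lambda>x. mu k x * V x) (states n)) \<le> real (Suc m) * EBn"
    using EE_sum[OF S1, of "Suc m"] unfolding EE_def .
  then show "infsum (\<lambda>x. nu m x * V x) (states n) \<le> EBn" using N by (simp add: divide_le_eq mult.commute)
qed

end


lemma diag_conv:
  fixes f :: "nat \<Rightarrow> nat \<Rightarrow> real"
  assumes bdd: "\<And>m k. \<bar>f m k\<bar> \<le> B"
  shows "\<exists>d. strict_mono d \<and> (\<forall>k. convergent (\<lambda>j. f (d j) k))"
proof -
  let ?P = "\<lambda>k s. convergent (\<lambda>j. f (s j) k)"
  interpret nat: subseqs ?P
  proof (unfold convergent_def, unfold subseqs_def, auto)
    fix k :: nat and s :: "nat \<Rightarrow> nat" assume s: "strict_mono s"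
    have "bounded {-B..B}" using bounded_closed_interval by auto
    moreover have "\<And>j. f (s j) k \<in> {-B..B}" using bdd by (simp add: abs_le_iff minus_le_iff)
    ultimately have "\<exists>l s'. strict_mono s' \<and> ((\<lambda>j. f (s j) k) \<circ> s') \<longlonglongrightarrow> l"
      using compact_Icc compact_imp_seq_compact seq_compactE by metis
    thus "\<exists>s'. strict_mono (s'::nat\<Rightarrow>nat) \<and> (\<exists>l. (\<lambda>j. f (s (s' j)) k) \<longlonglongrightarrow> l)"
      by (auto simp: comp_def)
  qed
  define d where "d = nat.diagseq"
  have subseq: "strict_mono d" unfolding d_def using nat.subseq_diagseq by auto
  have cnv: "?P k d" for k
  proof -
    have Pn_seqseq: "?P k (nat.seqseq (Suc k))" by (rule nat.seqseq_holds)
    have 1: "(\<lambda>j. f ((nat.seqseq (Suc k) \<circ> (\<lambda>j. nat.fold_reduce (Suc k) j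
      (Suc k + j))) j) k) = (\<lambda>j. f (nat.seqseq (Suc k) j) k) \<circ>
      (\<lambda>j. nat.fold_reduce (Suc k) j (Suc k + j))"
      by auto
    have 2: "?P k (d \<circ> ((+) (Suc k)))"
      unfolding d_def nat.diagseq_seqseq 1
      by (intro convergent_subseq_convergent Pn_seqseq nat.subseq_diagonal_rest)
    then obtain L where 3: "(\<lambda>j. f (d (j + Suc k)) k) \<longlonglongrightarrow> L"
      by (auto simp: add.commute dest: convergentD)
    then have "(\<lambda>j. f (d j) k) \<longlonglongrightarrow> L" by (rule LIMSEQ_offset)
    then show ?thesis by (auto simp: convergent_def)
  qed
  show ?thesis using subseq cnv by blast
qed

lemma countable_states: "countable (states n)"
proof -
  define h where "h = (\<lambda>l::nat list. \<lambda>v. if 1 \<le> v \<and> v \<le> n then (if v - 1 < length l then l ! (v - 1) else 0) else 0)"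
  have "states n \<subseteq> range h"
  proof
    fix x assume x: "x \<in> states n"
    have "x = h (map x [1..<Suc n])"
      using x unfolding h_def states_def by (auto simp: fun_eq_iff nth_map_upt simp del: upt_Suc)
    then show "x \<in> range h" by blast
  qed
  then show ?thesis by (rule countable_subset) simp
qed


context beams begin

lemma InS_lin: "InS (\<lambda>y. a * f y + b * g y) x = a * InS f x + b * InS g x"
proof -
  have "\<And>v. (if 1 \<le> x v then lam v * (a * f (dn v x) + b * g (dn v x)) else 0) + r v * gamma n v (up v x) * (a * f (up v x) + b * g (up v x))
     = a * ((if 1 \<le> x v then lam v * f (dn v x) else 0) + r v * gamma n v (up v x) * f (up v x))
     + b * ((if 1 \<le> x v then lam v * g (dn v x) else 0) + r v * gamma n v (up v x) * g (up v x))"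
    by (auto simp: algebra_simps)
  then show ?thesis unfolding InS_def by (simp only: sum.distrib sum_distrib_left[symmetric])
qed

lemma InS_zero: "InS (\<lambda>y. 0) x = 0" unfolding InS_def by (rule sum.neutral) simp

lemma InS_sum: "finite A \<Longrightarrow> InS (\<lambda>y. \<Sum>k\<in>A. f k y) x = (\<Sum>k\<in>A. InS (f k) x)"
proof (induction A rule: finite_induct)
  case empty then show ?case by (simp add: InS_zero)
next
  case (insert a F)
  have "InS (\<lambda>y. \<Sum>k\<in>insert a F. f k y) x = InS (\<lambda>y. 1 * f a y + 1 * (\<Sum>k\<in>F. f k y)) x"
    using insert by simp
  also have "\<dots> = InS (f a) x + InS (\<lambda>y. \<Sum>k\<in>F. f k y) x" by (subst InS_lin) simp
  finally show ?case using insert by simp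
qed

lemma InS_cmult: "InS (\<lambda>y. c * f y) x = c * InS f x"
  using InS_lin[of c f 0 f x] by simp

lemma mu_bal: "x \<in> states n \<Longrightarrow> InS (mu k) x - q x * mu k x = qM * (mu (Suc k) x - mu k x)"
  unfolding mu_Suc step_def using qM_pos by (simp add: field_simps)

lemma nu_bal:
  assumes x: "x \<in> states n"
  shows "InS (nu m) x - q x * nu m x = qM * (mu (Suc m) x - mu 0 x) / real (Suc m)"
proof -
  have e: "nu m = (\<lambda>y. (1 / real (Suc m)) * (\<Sum>k<Suc m. mu k y))" unfolding nu_def by (simp add: fun_eq_iff)
  have "InS (nu m) x = (1 / real (Suc m)) * (\<Sum>k<Suc m. InS (mu k) x)"
    unfolding e InS_cmult InS_sum[OF finite_lessThan] ..
  then have "InS (nu m) x - q x * nu m x = (1 / real (Suc m)) * (\<Sum>k<Suc m. InS (mu k) x - q x * mu k x)"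
    unfolding e by (simp add: sum_subtractf sum_distrib_left algebra_simps del: sum.lessThan_Suc)
  also have "\<dots> = (1 / real (Suc m)) * (\<Sum>k<Suc m. qM * (mu (Suc k) x - mu k x))"
    using mu_bal[OF x] by simp
  also have "(\<Sum>k<Suc m. qM * (mu (Suc k) x - mu k x)) = qM * (mu (Suc m) x - mu 0 x)"
  proof -
    have T: "(\<Sum>k<Suc m. mu (Suc k) x - mu k x) = mu (Suc m) x - mu 0 x"
      using sum_lessThan_telescope[of "\<lambda>k. mu k x" "Suc m"] by simp
    show ?thesis by (simp only: sum_distrib_left[symmetric] T)
  qed
  finally show ?thesis by simp
qed

lemma nu_bal_bound:
  assumes x: "x \<in> states n"
  shows "\<bar>InS (nu m) x - q x * nu m x\<bar> \<le> qM / real (Suc m)"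
proof -
  have "\<bar>mu (Suc m) x - mu 0 x\<bar> \<le> 1" using mu_nn mu_le1[OF x] by (simp add: abs_le_iff) (smt (verit) mu_le1[OF x] mu_nn)
  then have "\<bar>qM * (mu (Suc m) x - mu 0 x)\<bar> \<le> qM" using qM_pos by (simp add: abs_mult mult_le_cancel_left1)
  then show ?thesis unfolding nu_bal[OF x] by (simp add: divide_right_mono)
qed

lemma finite_FM: "finite {x \<in> states n. V x < M}"
proof -
  define R where "R = (\<Sum>v\<in>{1..n}. r v)"
  define K where "K = nat \<lceil>R * M\<rceil>"
  have "{x \<in> states n. V x < M} \<subseteq> {f. \<forall>v. (v \<in> {1..n} \<longrightarrow> f v \<in> {0..K}) \<and> (v \<notin> {1..n} \<longrightarrow> f v = 0)}"
  proof
    fix x assume x: "x \<in> {x \<in> states n. V x < M}"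
    have "x v \<le> K" if v: "v \<in> {1..n}" for v
    proof -
      have "r v \<le> R" unfolding R_def using v r_nn by (intro member_le_sum) auto
      have "real (x v) \<le> r v * V x" by (rule yw_le[OF v])
      also have "\<dots> \<le> r v * M" using x r_nn[OF v] by (intro mult_left_mono) auto
      also have "\<dots> \<le> R * M"
      proof (cases "0 \<le> M")
        case True then show ?thesis using \<open>r v \<le> R\<close> by (intro mult_right_mono) auto
      next
        case False
        then have "V x < 0" using x by auto
        then show ?thesis using V_nonneg[of x] by simp
      qed
      also have "\<dots> \<le> real K" unfolding K_def by linarith
      finally show ?thesis by simp
    qed
    then show "x \<in> {f. \<forall>v. (v \<in> {1..n} \<longrightarrow> f v \<in> {0..K}) \<and> (v \<notin> {1..n} \<longrightarrow> f v = 0)}"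
      using x unfolding states_def by auto
  qed
  moreover have "finite {f. \<forall>v. (v \<in> {1..n} \<longrightarrow> f v \<in> {0..K}) \<and> (v \<notin> {1..n} \<longrightarrow> f v = 0)}"
    using finite_set_of_finite_funs[of "{1..n}" "{0..K}" 0] by simp
  ultimately show ?thesis by (rule finite_subset)
qed

lemma nu_summ: "(\<lambda>x. nu m x * g x) summable_on A"
proof -
  have "finite {x. nu m x \<noteq> 0}"
  proof (rule finite_subset)
    show "{x. nu m x \<noteq> 0} \<subseteq> (\<Union>k<Suc m. {x. mu k x \<noteq> 0})"
    proof
      fix x assume "x \<in> {x. nu m x \<noteq> 0}"
      then have "(\<Sum>k<Suc m. mu k x) \<noteq> 0" unfolding nu_def by auto
      then obtain k where "k \<in> {..<Suc m}" "mu k x \<noteq> 0" using sum.not_neutral_contains_not_neutral by blast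
      then show "x \<in> (\<Union>k<Suc m. {x. mu k x \<noteq> 0})" by blast
    qed
    show "finite (\<Union>k<Suc m. {x. mu k x \<noteq> 0})" using mu_fsupp unfolding fsupp_def by auto
  qed
  then show ?thesis by (intro fs_summable fs_mult)
qed

lemma nu_FM:
  assumes S1: "S < 1" and M: "0 < M"
  shows "1 - EBn / M \<le> sum (nu m) {x \<in> states n. V x < M}"
proof -
  let ?F = "{x \<in> states n. V x < M}"
  have s1: "(\<lambda>x. nu m x * (if V x < M then 1 else 0)) summable_on states n" by (rule nu_summ)
  have s2: "(\<lambda>x. nu m x * (if V x < M then 0 else 1)) summable_on states n" by (rule nu_summ)
  have "1 = infsum (\<lambda>x. nu m x * (if V x < M then 1 else 0) + nu m x * (if V x < M then 0 else 1)) (states n)"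
  proof -
    have "(\<lambda>x. nu m x * (if V x < M then 1 else 0) + nu m x * (if V x < M then 0 else 1)) = nu m"
      by (auto simp: fun_eq_iff)
    then show ?thesis using nu_mass[of m] by simp
  qed
  also have "\<dots> = infsum (\<lambda>x. nu m x * (if V x < M then 1 else 0)) (states n) + infsum (\<lambda>x. nu m x * (if V x < M then 0 else 1)) (states n)"
    by (rule infsum_add[OF s1 s2])
  also have "infsum (\<lambda>x. nu m x * (if V x < M then 1 else 0)) (states n) = sum (nu m) ?F"
  proof -
    have "infsum (\<lambda>x. nu m x * (if V x < M then 1 else 0)) (states n) = infsum (nu m) ?F"
      by (intro infsum_cong_neutral) auto
    then show ?thesis using finite_FM by simp
  qed
  also have "infsum (\<lambda>x. nu m x * (if V x < M then 0 else 1)) (states n) \<le> infsum (\<lambda>x. (1 / M) * (nu m x * V x)) (states n)"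
  proof (rule infsum_mono[OF s2])
    show "(\<lambda>x. (1 / M) * (nu m x * V x)) summable_on states n" by (intro summable_on_cmult_right nu_summ)
    fix x
    show "nu m x * (if V x < M then 0 else 1) \<le> (1 / M) * (nu m x * V x)"
    proof (cases "V x < M")
      case True then show ?thesis using nu_nn[of m x] V_nonneg[of x] M by simp
    next
      case False
      then have "nu m x * M \<le> nu m x * V x" using nu_nn[of m x] by (intro mult_left_mono) auto
      then show ?thesis using False M by (simp add: field_simps)
    qed
  qed
  also have "infsum (\<lambda>x. (1 / M) * (nu m x * V x)) (states n) \<le> EBn / M"
  proof -
    have "infsum (\<lambda>x. (1 / M) * (nu m x * V x)) (states n) = (1 / M) * infsum (\<lambda>x. nu m x * V x) (states n)"
      by (rule infsum_cmult_right[OF nu_V(1)[OF S1]])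
    also have "\<dots> \<le> (1 / M) * EBn" using nu_V(2)[OF S1, of m] M by (intro mult_left_mono) auto
    finally show ?thesis by simp
  qed
  finally show ?thesis by simp
qed

end


context beams begin

lemma InS_tendsto:
  assumes g: "\<And>y. y \<in> states n \<Longrightarrow> (\<lambda>j. g j y) \<longlonglongrightarrow> h y" and x: "x \<in> states n"
  shows "(\<lambda>j. InS (g j) x) \<longlonglongrightarrow> InS h x"
  unfolding InS_def
proof (intro tendsto_sum tendsto_add)
  fix v assume v: "v \<in> {1..n}"
  show "(\<lambda>j. if 1 \<le> x v then lam v * g j (dn v x) else 0) \<longlonglongrightarrow> (if 1 \<le> x v then lam v * h (dn v x) else 0)"
  proof (cases "1 \<le> x v")
    case True
    then show ?thesis using g[OF dn_in_states[OF x]] by (simp add: tendsto_mult_left)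
  qed simp
  show "(\<lambda>j. r v * gamma n v (up v x) * g j (up v x)) \<longlonglongrightarrow> r v * gamma n v (up v x) * h (up v x)"
    using g[OF up_in_states[OF x v]] by (rule tendsto_mult_left)
qed

lemma exists_stationary:
  assumes S1: "S < 1"
  shows "\<exists>\<pi>. stationary n lam r \<pi>"
proof -
  define e where "e = from_nat_into (states n)"
  have ne: "states n \<noteq> {}" using o0_states by auto
  have e_in: "e k \<in> states n" for k unfolding e_def using from_nat_into[OF ne] .
  have e_surj: "\<exists>k. e k = x" if "x \<in> states n" for x
    unfolding e_def using from_nat_into_surj[OF countable_states that] .
  have bdd: "\<bar>nu m (e k)\<bar> \<le> 1" for m k using nu_nn[of m "e k"] nu_le1[OF e_in] by simp
  obtain d where d: "strict_mono d" "\<And>k. convergent (\<lambda>j. nu (d j) (e k))"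
    using diag_conv[where f="\<lambda>m k. nu m (e k)", OF bdd] by blast
  have conv: "convergent (\<lambda>j. nu (d j) x)" if "x \<in> states n" for x
    using e_surj[OF that] d(2) by blast
  define \<pi> where "\<pi> x = (if x \<in> states n then lim (\<lambda>j. nu (d j) x) else 0)" for x
  have lim: "(\<lambda>j. nu (d j) x) \<longlonglongrightarrow> \<pi> x" if x: "x \<in> states n" for x
    unfolding \<pi>_def using x conv[OF x] by (simp add: convergent_LIMSEQ_iff)
  have pnn: "0 \<le> \<pi> x" for x
  proof (cases "x \<in> states n")
    case True
    show ?thesis by (rule LIMSEQ_le_const[OF lim[OF True]]) (use nu_nn in auto)
  qed (simp add: \<pi>_def)
  have pout: "x \<notin> states n \<Longrightarrow> \<pi> x = 0" for x by (simp add: \<pi>_def)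
  have bal: "\<pi> x * q x = InS \<pi> x" if x: "x \<in> states n" for x
  proof -
    have t1: "(\<lambda>j. InS (nu (d j)) x - q x * nu (d j) x) \<longlonglongrightarrow> InS \<pi> x - q x * \<pi> x"
      by (intro tendsto_diff tendsto_mult_left InS_tendsto lim x)
    have t2: "(\<lambda>j. InS (nu (d j)) x - q x * nu (d j) x) \<longlonglongrightarrow> 0"
    proof (rule Lim_null_comparison)
      show "\<forall>\<^sub>F j in sequentially. norm (InS (nu (d j)) x - q x * nu (d j) x) \<le> qM * inverse (real (Suc j))"
      proof (intro always_eventually allI)
        fix j
        have "norm (InS (nu (d j)) x - q x * nu (d j) x) \<le> qM / real (Suc (d j))"
          using nu_bal_bound[OF x] by simp
        also have "\<dots> \<le> qM / real (Suc j)"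
          using seq_suble[OF d(1), of j] qM_pos by (intro divide_left_mono) auto
        finally show "norm (InS (nu (d j)) x - q x * nu (d j) x) \<le> qM * inverse (real (Suc j))"
          by (simp add: field_simps)
      qed
      show "(\<lambda>j. qM * inverse (real (Suc j))) \<longlonglongrightarrow> 0"
        using tendsto_mult_left[OF LIMSEQ_inverse_real_of_nat, of qM] by simp
    qed
    have "InS \<pi> x - q x * \<pi> x = 0" using LIMSEQ_unique[OF t1 t2] .
    then show ?thesis by (simp add: algebra_simps)
  qed
  have fin_le: "sum \<pi> F \<le> 1" if F: "finite F" "F \<subseteq> states n" for F
  proof -
    have t: "(\<lambda>j. sum (nu (d j)) F) \<longlonglongrightarrow> sum \<pi> F"
      using F by (intro tendsto_sum lim) auto
    have b: "sum (nu (d j)) F \<le> 1" for j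
    proof -
      have "sum (nu (d j)) F \<le> infsum (nu (d j)) (states n)"
        using F nu_nn nu_summ[of "d j" "\<lambda>_. 1" "states n"] by (intro finite_sum_le_infsum) auto
      then show ?thesis using nu_mass by simp
    qed
    show ?thesis by (rule LIMSEQ_le_const2[OF t]) (use b in auto)
  qed
  have FM: "1 - EBn / M \<le> sum \<pi> {x \<in> states n. V x < M}" if M: "0 < M" for M
  proof -
    have t: "(\<lambda>j. sum (nu (d j)) {x \<in> states n. V x < M}) \<longlonglongrightarrow> sum \<pi> {x \<in> states n. V x < M}"
      by (intro tendsto_sum lim) auto
    have b: "1 - EBn / M \<le> sum (nu (d j)) {x \<in> states n. V x < M}" for j by (rule nu_FM[OF S1 M])
    show ?thesis by (rule LIMSEQ_le_const[OF t]) (use b in auto)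
  qed
  have summ: "\<pi> summable_on states n"
    by (rule nonneg_bdd_above_summable_on) (use pnn fin_le in \<open>auto intro!: bdd_aboveI\<close>)
  have le1: "infsum \<pi> (states n) \<le> 1" by (rule infsum_le_finite_sums[OF summ fin_le])
  have ge1: "1 \<le> infsum \<pi> (states n)"
  proof (rule ccontr)
    assume "\<not> 1 \<le> infsum \<pi> (states n)"
    then have s: "infsum \<pi> (states n) < 1" by simp
    define M where "M = (EBn + 1) / (1 - infsum \<pi> (states n))"
    have EB: "0 \<le> EBn" unfolding EBn_def using A1_nn A2_nn S1 by simp
    have M: "0 < M" unfolding M_def using s EB by simp
    have "EBn / M < 1 - infsum \<pi> (states n)"
      unfolding M_def using s EB by (simp add: field_simps)
    moreover have "sum \<pi> {x \<in> states n. V x < M} \<le> infsum \<pi> (states n)"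
      using finite_FM pnn by (intro finite_sum_le_infsum summ) auto
    ultimately show False using FM[OF M] by simp
  qed
  have hs: "(\<pi> has_sum 1) (states n)"
    using summ le1 ge1 by (metis antisym has_sum_infsum)
  have "stationary n lam r \<pi>"
    unfolding stationary_def
    using pnn pout hs bal by (simp add: qout_eq infsum_in)
  then show ?thesis by blast
qed

end


theorem theorem3:
  fixes n :: nat and lam r :: "nat \<Rightarrow> real"
  assumes "n \<ge> 1"
    and "\<forall>v\<in>{1..n}. lam v > 0" and "\<forall>v\<in>{1..n}. r v > 0"
  defines "\<rho> \<equiv> (\<lambda>v. lam v / r v)"
  shows "(pos_recurrent n lam r \<longleftrightarrow> (\<Sum>v\<in>{1..n}. \<rho> v) < 1)
    \<and> ((\<Sum>v\<in>{1..n}. \<rho> v) < 1 \<longrightarrow>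
         (\<exists>\<pi>. stationary n lam r \<pi>) \<and>
         (\<forall>\<pi>. stationary n lam r \<pi> \<longrightarrow> (\<forall>v\<in>{1..n}.
            mean_N n \<pi> v =
              \<rho> v * (1 + (\<Sum>v'\<in>{v..n}. \<rho> v' * (r v / r v' - 1)))
              / ((1 - (\<Sum>v'\<in>{v..n}. \<rho> v')) * (1 - (\<Sum>v'\<in>{v<..n}. \<rho> v')))
            \<and> lam v / mean_N n \<pi> v =
              r v * (1 - (\<Sum>v'\<in>{v..n}. \<rho> v')) * (1 - (\<Sum>v'\<in>{v<..n}. \<rho> v'))
              / (1 + (\<Sum>v'\<in>{v..n}. \<rho> v' * (r v / r v' - 1))))))"
proof -
  interpret B: beams n lam r
    using assms(1-3) by unfold_locales auto
  have Seq: "B.S = (\<Sum>v\<in>{1..n}. \<rho> v)" unfolding B.S_eq B.Ss_def \<rho>_def ..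
  have P1: "pos_recurrent n lam r \<longleftrightarrow> (\<Sum>v\<in>{1..n}. \<rho> v) < 1"
  proof
    assume pr: "pos_recurrent n lam r"
    show "(\<Sum>v\<in>{1..n}. \<rho> v) < 1"
    proof (rule ccontr)
      assume "\<not> (\<Sum>v\<in>{1..n}. \<rho> v) < 1"
      then have "1 \<le> B.S" unfolding Seq by simp
      then have "mean_return n lam r (\<lambda>_. 0) = \<infinity>" by (rule B.mean_return_inf)
      moreover have "mean_return n lam r (\<lambda>_. 0) < \<infinity>"
        using pr B.o0_states unfolding pos_recurrent_def by blast
      ultimately show False by simp
    qed
  next
    assume "(\<Sum>v\<in>{1..n}. \<rho> v) < 1"
    then have S1: "B.S < 1" unfolding Seq .
    show "pos_recurrent n lam r"
      unfolding pos_recurrent_def using B.irred B.mean_return_fin[OF S1] by blast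
  qed
  have P2: "(\<exists>\<pi>. stationary n lam r \<pi>) \<and>
         (\<forall>\<pi>. stationary n lam r \<pi> \<longrightarrow> (\<forall>v\<in>{1..n}.
            mean_N n \<pi> v =
              \<rho> v * (1 + (\<Sum>v'\<in>{v..n}. \<rho> v' * (r v / r v' - 1)))
              / ((1 - (\<Sum>v'\<in>{v..n}. \<rho> v')) * (1 - (\<Sum>v'\<in>{v<..n}. \<rho> v')))
            \<and> lam v / mean_N n \<pi> v =
              r v * (1 - (\<Sum>v'\<in>{v..n}. \<rho> v')) * (1 - (\<Sum>v'\<in>{v<..n}. \<rho> v'))
              / (1 + (\<Sum>v'\<in>{v..n}. \<rho> v' * (r v / r v' - 1)))))"
    if h: "(\<Sum>v\<in>{1..n}. \<rho> v) < 1"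
  proof -
    have S1: "B.S < 1" using h unfolding Seq .
    show ?thesis
      using B.exists_stationary[OF S1] B.mean_formula[OF _ S1] unfolding \<rho>_def by blast
  qed
  show ?thesis using P1 P2 by blast
qed


end
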